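(* Assume $S\neq\emptyset$ and let $k\ge\max(1,k_1,\dots,k_m)$. If $\mathcal{Q}_k(\tilde G)$ is closed in $\mathbb{R}[\tilde X]_{2k}$, then $\widetilde{\mathrm{TH}}_k(\tilde G)=\overline{\Omega_k(\tilde G)}$.
   Context: $X=(X_1,\dots,X_n)$, $\tilde X=(X_0,X_1,\dots,X_n)$, $\|\cdot\|_2$ Euclidean norm; $\mathbb{R}[\tilde X]_{2k}$ is the space of polynomials of degree at most $2k$. For $f\in\mathbb{R}[X]$ of degree $d$, its homogenization is $\tilde f(\tilde X)=X_0^df(X/X_0)\in\mathbb{R}[\tilde X]$. Fix $g_1,\dots,g_m\in\mathbb{R}[X]$ and $S=\{x\in\mathbb{R}^n:g_1(x)\ge0,\dots,g_m(x)\ge0\}$. For a finite set $H=\{h_1,\dots,h_r\}$ of polynomials, the $k$-th quadratic module is $\mathcal{Q}_k(H)=\{\sum_{j=0}^r\sigma_jh_j:h_0=1,\ \sigma_j\text{ sums of squares of polynomials},\ \deg(\sigma_jh_j)\le2k\}$. Let $\tilde G=\{\tilde g_1,\dots,\tilde g_m,X_0,\|\tilde X\|_2^2-1,1-\|\tilde X\|_2^2\}$. Let $\mathcal{P}[\tilde X]_1$ be the set of linear forms (homogeneous of degree one) in $\tilde X$ together with $0$. The modified theta body is $\widetilde{\mathrm{TH}}_k(\tilde G)=\{x\in\mathbb{R}^n:\tilde l(1,x)\ge0\ \forall\tilde l\in\mathcal{Q}_k(\tilde G)\cap\mathcal{P}[\tilde X]_1\}$. Moments: for $y=(y_\alpha)_{\alpha\in\mathbb{N}^{n+1},|\alpha|\le2k}$,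 the Riesz functional is $L_y(\sum_\alpha q_\alpha\tilde X^\alpha)=\sum_\alpha q_\alpha y_\alpha$; the moment matrix $M_k(y)$ is indexed by $\alpha,\beta\in\mathbb{N}^{n+1}$, $|\alpha|,|\beta|\le k$, with entries $y_{\alpha+\beta}$; for $p=\sum_\beta p_\beta\tilde X^\beta$ with $d_p=\lceil\deg p/2\rceil\le k$, the localizing matrix $M_{k-d_p}(py)$ is indexed by $|\alpha|,|\gamma|\le k-d_p$ with entries $\sum_\beta p_\beta y_{\alpha+\gamma+\beta}$. With $k_j=\lceil\deg g_j/2\rceil$, the modified Lasserre relaxation is $\Omega_k(\tilde G)=\{x\in\mathbb{R}^n:\exists y=(y_\alpha)_{|\alpha|\le2k}\text{ with }L_y(X_0)=1,\ L_y(X_i)=x_i\ (i=1,\dots,n),\ M_{k-1}(X_0y)\succeq0,\ M_{k-1}((\|\tilde X\|_2^2-1)y)=0,\ M_k(y)\succeq0,\ M_{k-k_j}(\tilde g_jy)\succeq0\ (j=1,\dots,m)\}$. Overline denotes closure. *)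

theory Defs
  imports "HOL-Analysis.Analysis" "HOL-Library.Poly_Mapping"
begin

text \<open>For the homogenized variables
  X0, X1, ..., Xn we use the variable type 'n option, where None is X0 and Some i
  is Xi (i ranging over the finite type 'n, so R^n is real^'n).\<close>

type_synonym 'v mpoly = "('v \<Rightarrow>\<^sub>0 nat) \<Rightarrow>\<^sub>0 real"

definition mdeg :: "('v \<Rightarrow>\<^sub>0 nat) \<Rightarrow> nat" where
  "mdeg a = (\<Sum>i\<in>Poly_Mapping.keys a. Poly_Mapping.lookup a i)"

definition pdeg :: "'v mpoly \<Rightarrow> nat" where
  "pdeg p = Max (insert 0 (mdeg ` Poly_Mapping.keys p))"

definition pvar :: "'v \<Rightarrow> 'v mpoly" where
  "pvar i = Poly_Mapping.single (Poly_Mapping.single i 1) 1"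

definition peval :: "'v mpoly \<Rightarrow> ('v \<Rightarrow> real) \<Rightarrow> real" where
  "peval p z = (\<Sum>a\<in>Poly_Mapping.keys p. Poly_Mapping.lookup p a * (\<Prod>i\<in>Poly_Mapping.keys a. z i ^ Poly_Mapping.lookup a i))"

definition hpt :: "real^'n \<Rightarrow> 'n option \<Rightarrow> real" where
  "hpt x = (\<lambda>i. case i of None \<Rightarrow> 1 | Some j \<Rightarrow> x $ j)"

definition in_X :: "'n option mpoly \<Rightarrow> bool" where
  "in_X p \<longleftrightarrow> (\<forall>a\<in>Poly_Mapping.keys p. None \<notin> Poly_Mapping.keys a)"

text \<open>Homogenization: tilde f = X0^d f(X/X0), d = deg f, coefficientwise.\<close>
definition homog :: "'n option mpoly \<Rightarrow> 'n option mpoly" where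
  "homog f = (\<Sum>a\<in>Poly_Mapping.keys f. Poly_Mapping.single
      (a + Poly_Mapping.single None (pdeg f - mdeg a)) (Poly_Mapping.lookup f a))"

definition sqnorm :: "'n::finite option mpoly" where
  "sqnorm = (\<Sum>i\<in>UNIV. pvar i * pvar i)"

definition sos :: "'v mpoly \<Rightarrow> bool" where
  "sos s \<longleftrightarrow> (\<exists>qs. s = sum_list (map (\<lambda>q. q * q) qs))"

definition qmodule :: "nat \<Rightarrow> 'v mpoly list \<Rightarrow> 'v mpoly set" where
  "qmodule k H = {(\<Sum>j<length (1 # H). \<sigma> j * ((1 # H) ! j)) | \<sigma>.
      \<forall>j<length (1 # H). sos (\<sigma> j) \<and> pdeg (\<sigma> j * ((1 # H) ! j)) \<le> 2 * k}"

definition polys_deg :: "nat \<Rightarrow> 'v mpoly set" where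
  "polys_deg d = {p. pdeg p \<le> d}"

text \<open>Closedness of a set C inside the finite-dimensional space R[tilde X]_d, for its
  (unique Hausdorff vector space, i.e. coefficientwise) topology, stated sequentially.\<close>
definition closed_in_polys :: "nat \<Rightarrow> 'v mpoly set \<Rightarrow> bool" where
  "closed_in_polys d C \<longleftrightarrow> C \<subseteq> polys_deg d \<and>
     (\<forall>ps q. (\<forall>j. ps j \<in> C) \<and> q \<in> polys_deg d \<and>
        (\<forall>a. (\<lambda>j. Poly_Mapping.lookup (ps j) a) \<longlonglongrightarrow> Poly_Mapping.lookup q a) \<longrightarrow> q \<in> C)"

definition linforms :: "'v mpoly set" where
  "linforms = {l. \<forall>a\<in>Poly_Mapping.keys l. mdeg a = 1}"

definition semialg :: "'n option mpoly list \<Rightarrow> (real^'n) set" where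
  "semialg gs = {x. \<forall>g\<in>set gs. peval g (hpt x) \<ge> 0}"

definition Gtilde :: "'n::finite option mpoly list \<Rightarrow> 'n option mpoly list" where
  "Gtilde gs = map homog gs @ [pvar None, sqnorm - 1, 1 - sqnorm]"

definition modTH :: "nat \<Rightarrow> 'n::finite option mpoly list \<Rightarrow> (real^'n) set" where
  "modTH k G = {x. \<forall>l\<in>qmodule k G \<inter> linforms. peval l (hpt x) \<ge> 0}"

definition riesz :: "(('v \<Rightarrow>\<^sub>0 nat) \<Rightarrow> real) \<Rightarrow> 'v mpoly \<Rightarrow> real" where
  "riesz y p = (\<Sum>a\<in>Poly_Mapping.keys p. Poly_Mapping.lookup p a * y a)"

definition mons :: "nat \<Rightarrow> ('v \<Rightarrow>\<^sub>0 nat) set" where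
  "mons d = {a. mdeg a \<le> d}"

definition locmat :: "'v mpoly \<Rightarrow> (('v \<Rightarrow>\<^sub>0 nat) \<Rightarrow> real) \<Rightarrow> ('v \<Rightarrow>\<^sub>0 nat) \<Rightarrow> ('v \<Rightarrow>\<^sub>0 nat) \<Rightarrow> real" where
  "locmat p y a c = (\<Sum>b\<in>Poly_Mapping.keys p. Poly_Mapping.lookup p b * y (a + c + b))"

definition loc_psd :: "nat \<Rightarrow> 'v mpoly \<Rightarrow> (('v \<Rightarrow>\<^sub>0 nat) \<Rightarrow> real) \<Rightarrow> bool" where
  "loc_psd d p y \<longleftrightarrow> (\<forall>v. 0 \<le> (\<Sum>a\<in>mons d. \<Sum>c\<in>mons d. v a * locmat p y a c * v c))"

definition loc_zero :: "nat \<Rightarrow> 'v mpoly \<Rightarrow> (('v \<Rightarrow>\<^sub>0 nat) \<Rightarrow> real) \<Rightarrow> bool" where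
  "loc_zero d p y \<longleftrightarrow> (\<forall>a\<in>mons d. \<forall>c\<in>mons d. locmat p y a c = 0)"

definition kdeg :: "'v mpoly \<Rightarrow> nat" where
  "kdeg g = (pdeg g + 1) div 2"

definition Omega :: "nat \<Rightarrow> 'n::finite option mpoly list \<Rightarrow> (real^'n) set" where
  "Omega k gs = {x. \<exists>y. riesz y (pvar None) = 1
      \<and> (\<forall>i. riesz y (pvar (Some i)) = x $ i)
      \<and> loc_psd (k - 1) (pvar None) y
      \<and> loc_zero (k - 1) (sqnorm - 1) y
      \<and> loc_psd k 1 y
      \<and> (\<forall>g\<in>set gs. loc_psd (k - kdeg g) (homog g) y)}"

end

theory Submission
  imports Defs
begin

abbreviation lk where "lk \<equiv> Poly_Mapping.lookup"
abbreviation ks where "ks \<equiv> Poly_Mapping.keys"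
abbreviation sg where "sg \<equiv> Poly_Mapping.single"

lemma lk_single: "lk (sg k v) k' = (if k = k' then v else 0)"
  by (simp add: lookup_single when_def)

lemma mdeg_superset: "finite S \<Longrightarrow> ks a \<subseteq> S \<Longrightarrow> mdeg a = (\<Sum>i\<in>S. lk a i)"
  unfolding mdeg_def by (rule sum.mono_neutral_left) (auto simp: in_keys_iff)

lemma mdeg_add: "mdeg (a + b) = mdeg a + mdeg b"
proof -
  let ?S = "ks a \<union> ks b"
  have "mdeg (a+b) = (\<Sum>i\<in>?S. lk (a+b) i)"
    by (rule mdeg_superset) (use keys_add[of a b] in auto)
  also have "\<dots> = (\<Sum>i\<in>?S. lk a i) + (\<Sum>i\<in>?S. lk b i)"
    by (simp add: lookup_add sum.distrib)
  also have "\<dots> = mdeg a + mdeg b"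
    by (subst (1 2) mdeg_superset[of ?S]) auto
  finally show ?thesis .
qed

lemma mdeg_single[simp]: "mdeg (sg i n) = n"
  by (simp add: mdeg_def)

lemma mdeg_zero[simp]: "mdeg 0 = 0"
  by (simp add: mdeg_def)

lemma lk_le_mdeg: "lk a i \<le> mdeg a"
proof (cases "i \<in> ks a")
  case True
  then show ?thesis unfolding mdeg_def by (intro member_le_sum) auto
qed (simp add: in_keys_iff)

lemma pdeg_le_iff: "pdeg p \<le> d \<longleftrightarrow> (\<forall>a\<in>ks p. mdeg a \<le> d)"
  unfolding pdeg_def by (subst Max_le_iff) auto

lemma mdeg_le_pdeg: "a \<in> ks p \<Longrightarrow> mdeg a \<le> pdeg p"
  using pdeg_le_iff by blast

lemma pdeg_le_mons: "pdeg p \<le> d \<longleftrightarrow> ks p \<subseteq> mons d"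
  by (auto simp: pdeg_le_iff mons_def)

lemma pdeg_add_le: "pdeg (p + q) \<le> max (pdeg p) (pdeg q)"
  unfolding pdeg_le_iff
proof
  fix a assume "a \<in> ks (p+q)"
  then have "a \<in> ks p \<or> a \<in> ks q" using keys_add[of p q] by auto
  then show "mdeg a \<le> max (pdeg p) (pdeg q)" using mdeg_le_pdeg by fastforce
qed

lemma keys_uminus'[simp]: "ks (- p) = ks p"
  by (rule set_eqI) (simp add: in_keys_iff)

lemma pdeg_uminus[simp]: "pdeg (- p) = pdeg p"
  unfolding pdeg_def by simp

lemma pdeg_diff_le: "pdeg (p - q) \<le> max (pdeg p) (pdeg q)"
  using pdeg_add_le[of p "-q"] by simp

lemma pdeg_mult_le: "pdeg (p * q) \<le> pdeg p + pdeg q"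
  unfolding pdeg_le_iff
proof
  fix a assume "a \<in> ks (p*q)"
  then obtain b c where "a = b + c" "b \<in> ks p" "c \<in> ks q" using keys_mult by blast
  then show "mdeg a \<le> pdeg p + pdeg q"
    by (simp add: mdeg_add add_mono mdeg_le_pdeg)
qed

lemma pdeg_zero[simp]: "pdeg 0 = 0" by (simp add: pdeg_def)
lemma pdeg_one[simp]: "pdeg 1 = 0" by (simp add: pdeg_def)

lemma pdeg_single_le: "pdeg (sg a c) \<le> mdeg a"
  by (simp add: pdeg_le_iff)

lemma finite_mons: "finite (mons d :: ('v::finite \<Rightarrow>\<^sub>0 nat) set)"
proof -
  have inj: "inj_on lk (mons d :: ('v \<Rightarrow>\<^sub>0 nat) set)"
    by (rule inj_onI, rule poly_mapping_eqI) simp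
  have sub: "lk ` (mons d :: ('v \<Rightarrow>\<^sub>0 nat) set) \<subseteq> PiE UNIV (\<lambda>i. {..d})"
  proof
    fix f assume "f \<in> lk ` (mons d :: ('v \<Rightarrow>\<^sub>0 nat) set)"
    then obtain a :: "'v \<Rightarrow>\<^sub>0 nat" where "f = lk a" "mdeg a \<le> d" by (auto simp: mons_def)
    then show "f \<in> PiE UNIV (\<lambda>i. {..d})" using lk_le_mdeg[of a] by (auto intro: le_trans)
  qed
  have "finite (PiE (UNIV::'v set) (\<lambda>i. {..d}))" by (simp add: finite_PiE)
  then have "finite (lk ` (mons d :: ('v \<Rightarrow>\<^sub>0 nat) set))" by (rule finite_subset[OF sub])
  then show ?thesis by (rule finite_imageD[OF _ inj])
qed

lemma poly_expand: "finite A \<Longrightarrow> ks p \<subseteq> A \<Longrightarrow> p = (\<Sum>a\<in>A. sg a (lk p a))"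
proof (rule poly_mapping_eqI)
  fix k assume "finite A" "ks p \<subseteq> A"
  have "lk (\<Sum>a\<in>A. sg a (lk p a)) k = (\<Sum>a\<in>A. if a = k then lk p a else 0)"
    by (simp only: lookup_sum lk_single)
  also have "\<dots> = lk p k" using \<open>finite A\<close> \<open>ks p \<subseteq> A\<close> by (auto simp: in_keys_iff)
  finally show "lk p k = lk (\<Sum>a\<in>A. sg a (lk p a)) k" by simp
qed

lemma keys_sum_sub: "ks (sum f A) \<subseteq> (\<Union>a\<in>A. ks (f a))"
proof (induction A rule: infinite_finite_induct)
  case (insert x F)
  then show ?case using keys_add[of "f x" "sum f F"] by auto
qed auto

lemma riesz_superset: "finite A \<Longrightarrow> ks p \<subseteq> A \<Longrightarrow> riesz y p = (\<Sum>a\<in>A. lk p a * y a)"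
  unfolding riesz_def by (rule sum.mono_neutral_left) (auto simp: in_keys_iff)

lemma riesz_add: "riesz y (p + q) = riesz y p + riesz y q"
proof -
  let ?S = "ks p \<union> ks q"
  have "riesz y (p+q) = (\<Sum>a\<in>?S. lk (p+q) a * y a)"
    by (rule riesz_superset) (use keys_add[of p q] in auto)
  also have "\<dots> = (\<Sum>a\<in>?S. lk p a * y a) + (\<Sum>a\<in>?S. lk q a * y a)"
    by (simp add: lookup_add sum.distrib algebra_simps)
  also have "\<dots> = riesz y p + riesz y q"
    by (subst (1 2) riesz_superset[of ?S]) auto
  finally show ?thesis .
qed

lemma riesz_zero[simp]: "riesz y 0 = 0" by (simp add: riesz_def)

lemma riesz_sum: "riesz y (sum f A) = (\<Sum>a\<in>A. riesz y (f a))"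
  by (induction A rule: infinite_finite_induct) (auto simp: riesz_add)

lemma riesz_single: "riesz y (sg m c) = c * y m"
  by (simp add: riesz_def)

lemma riesz_uminus: "riesz y (- p) = - riesz y p"
  by (simp add: riesz_def in_keys_iff sum_negf)

lemma riesz_diff: "riesz y (p - q) = riesz y p - riesz y q"
  using riesz_add[of y p "-q"] riesz_uminus[of y q] by simp

lemma riesz_lin_y: "riesz (\<lambda>a. u * y1 a + v * y2 a) p = u * riesz y1 p + v * riesz y2 p"
  by (simp add: riesz_def sum.distrib sum_distrib_left algebra_simps)

lemma riesz_scale_y: "riesz (\<lambda>a. y1 a / t) p = riesz y1 p / t"
  by (simp add: riesz_def sum_divide_distrib)

lemma riesz_sum_list: "riesz y (sum_list xs) = sum_list (map (riesz y) xs)"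
  by (induction xs) (auto simp: riesz_add)

lemma mult_expand:
  "p * q = (\<Sum>b\<in>ks p. \<Sum>c\<in>ks q. sg (b + c) (lk p b * lk q c))"
proof -
  have "p * q = (\<Sum>b\<in>ks p. sg b (lk p b)) * (\<Sum>c\<in>ks q. sg c (lk q c))"
    using poly_expand[of "ks p" p] poly_expand[of "ks q" q] by simp
  also have "\<dots> = (\<Sum>b\<in>ks p. \<Sum>c\<in>ks q. sg (b + c) (lk p b * lk q c))"
    by (simp add: sum_distrib_left sum_distrib_right mult_single) (rule sum.swap)
  finally show ?thesis .
qed

lemma lookup_mult': "lk (p * q) k = (\<Sum>b\<in>ks p. \<Sum>c\<in>ks q. if b + c = k then lk p b * lk q c else 0)"
  by (subst mult_expand) (simp add: lookup_sum lk_single)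

lemma smul_expand: "sg 0 r * p = (\<Sum>b\<in>ks p. sg b (r * lk p b))"
proof -
  have "sg 0 r * p = sg 0 r * (\<Sum>b\<in>ks p. sg b (lk p b))"
    using poly_expand[of "ks p" p] by simp
  also have "\<dots> = (\<Sum>b\<in>ks p. sg b (r * lk p b))"
    by (simp add: sum_distrib_left mult_single)
  finally show ?thesis .
qed

lemma lk_smul: "lk (sg 0 r * p) a = r * lk p a"
  by (subst smul_expand) (auto simp: lookup_sum lk_single in_keys_iff)

lemma swap3: "(\<Sum>b\<in>B. \<Sum>c\<in>C. \<Sum>a\<in>A. f a c b) = (\<Sum>a\<in>A. \<Sum>c\<in>C. \<Sum>b\<in>B. f a c b)"
proof -
  have "(\<Sum>b\<in>B. \<Sum>c\<in>C. \<Sum>a\<in>A. f a c b) = (\<Sum>b\<in>B. \<Sum>a\<in>A. \<Sum>c\<in>C. f a c b)"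
    by (rule sum.cong[OF refl]) (rule sum.swap)
  also have "\<dots> = (\<Sum>a\<in>A. \<Sum>b\<in>B. \<Sum>c\<in>C. f a c b)" by (rule sum.swap)
  also have "\<dots> = (\<Sum>a\<in>A. \<Sum>c\<in>C. \<Sum>b\<in>B. f a c b)"
    by (rule sum.cong[OF refl]) (rule sum.swap)
  finally show ?thesis .
qed

lemma riesz_QF:
  assumes A: "finite A" "ks q \<subseteq> A"
  shows "riesz y (q * q * h) = (\<Sum>a\<in>A. \<Sum>c\<in>A. lk q a * locmat h y a c * lk q c)"
proof -
  define Q where "Q = (\<Sum>a\<in>A. sg a (lk q a))"
  define H where "H = (\<Sum>b\<in>ks h. sg b (lk h b))"
  have "q = Q" unfolding Q_def by (rule poly_expand[OF A])
  moreover have "h = H" unfolding H_def by (rule poly_expand) auto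
  ultimately have "q * q * h = Q * Q * H" by simp
  also have "\<dots> = (\<Sum>a\<in>A. sg a (lk q a)) * (\<Sum>c\<in>A. sg c (lk q c)) * (\<Sum>b\<in>ks h. sg b (lk h b))"
    unfolding Q_def H_def ..
  also have "\<dots> = (\<Sum>a\<in>A. \<Sum>c\<in>A. \<Sum>b\<in>ks h. sg (a + c + b) (lk q a * lk q c * lk h b))"
    by (simp add: sum_distrib_left sum_distrib_right mult_single) (rule swap3)
  finally have "riesz y (q*q*h) = (\<Sum>a\<in>A. \<Sum>c\<in>A. \<Sum>b\<in>ks h. lk q a * lk q c * lk h b * y (a + c + b))"
    by (simp add: riesz_sum riesz_single)
  also have "\<dots> = (\<Sum>a\<in>A. \<Sum>c\<in>A. lk q a * locmat h y a c * lk q c)"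
    unfolding locmat_def by (intro sum.cong refl) (simp add: sum_distrib_left sum_distrib_right mult_ac)
  finally show ?thesis .
qed


section \<open>Graded order and degree lower bound\<close>

definition psi :: "('v \<Rightarrow> nat) \<Rightarrow> ('v::finite \<Rightarrow>\<^sub>0 nat) \<Rightarrow> (nat \<Rightarrow>\<^sub>0 nat)" where
  "psi e a = sg 0 (mdeg a) + (\<Sum>i\<in>UNIV. sg (Suc (e i)) (lk a i))"

lemma psi_add: "psi e (a + b) = psi e a + psi e b"
  unfolding psi_def mdeg_add lookup_add single_add sum.distrib by (simp only: ac_simps)

lemma lk_psi0: "lk (psi e a) 0 = mdeg a"
  unfolding psi_def by (simp add: lookup_add lookup_sum lk_single)

lemma lk_psiS: "inj e \<Longrightarrow> lk (psi e a) (Suc (e i)) = lk a i"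
  unfolding psi_def by (simp add: lookup_add lookup_sum lk_single inj_eq)

lemma psi_inj: "inj e \<Longrightarrow> psi e a = psi e b \<Longrightarrow> a = b"
  by (metis lk_psiS poly_mapping_eqI)

lemma psi_grade: "mdeg a < mdeg b \<Longrightarrow> psi e a < psi e b"
  unfolding less_poly_mapping.rep_eq less_fun_def
  by (rule exI[of _ 0]) (simp add: lk_psi0)

lemma psi_le_mdeg: "psi e a \<le> psi e b \<Longrightarrow> mdeg a \<le> mdeg b"
  using psi_grade[of b a e] by (metis leD le_less_linear)

lemma KL:
  assumes e: "inj e" and p: "\<forall>b\<in>ks p. psi e b \<le> psi e A" and q: "\<forall>c\<in>ks q. psi e c \<le> psi e B"
  shows "lk (p * q) (A + B) = lk p A * lk q B"
proof -
  have eq: "b + c = A + B \<longleftrightarrow> b = A \<and> c = B" if "b \<in> ks p" "c \<in> ks q" for b c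
  proof
    assume h: "b + c = A + B"
    have pb: "psi e b \<le> psi e A" and pc: "psi e c \<le> psi e B" using p q that by auto
    have "psi e b + psi e c = psi e A + psi e B" using h by (metis psi_add)
    then have "psi e b = psi e A"
      using pb pc add_less_le_mono[of "psi e b" "psi e A" "psi e c" "psi e B"] by force
    then have "b = A" using psi_inj[OF e] by blast
    with h show "b = A \<and> c = B" by simp
  qed auto
  have "lk (p*q) (A+B) = (\<Sum>b\<in>ks p. \<Sum>c\<in>ks q. if b = A \<and> c = B then lk p b * lk q c else 0)"
    unfolding lookup_mult' by (intro sum.cong refl) (simp add: eq)
  also have "\<dots> = (\<Sum>b\<in>ks p. if b = A then (\<Sum>c\<in>ks q. if c = B then lk p b * lk q c else 0) else 0)"
    by (intro sum.cong refl) auto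
  also have "\<dots> = lk p A * lk q B"
    by (simp add: in_keys_iff)
  finally show ?thesis .
qed

lemma sos_keys:
  assumes "\<forall>q\<in>set qs. \<forall>b\<in>ks q. psi e b \<le> psi e M"
  shows "\<forall>b\<in>ks (sum_list (map (\<lambda>q. q*q) qs)). psi e b \<le> psi e (M+M)"
  using assms
proof (induction qs)
  case (Cons q qs)
  show ?case
  proof
    fix b assume "b \<in> ks (sum_list (map (\<lambda>q. q*q) (q # qs)))"
    then have "b \<in> ks (q*q) \<or> b \<in> ks (sum_list (map (\<lambda>q. q*q) qs))"
      using keys_add by fastforce
    then show "psi e b \<le> psi e (M+M)"
    proof
      assume "b \<in> ks (q*q)"
      then obtain c d where "b = c + d" "c \<in> ks q" "d \<in> ks q" using keys_mult by blast
      then show ?thesis using Cons.prems by (simp add: psi_add add_mono)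
    qed (use Cons in auto)
  qed
qed simp

lemma sos_top:
  fixes qs :: "(('v::finite \<Rightarrow>\<^sub>0 nat) \<Rightarrow>\<^sub>0 real) list"
  assumes e: "inj e" and "\<forall>q\<in>set qs. \<forall>b\<in>ks q. psi e b \<le> psi e M"
  shows "lk (sum_list (map (\<lambda>q. q*q) qs)) (M+M) = sum_list (map (\<lambda>q. (lk q M)^2) qs)"
  using assms(2)
proof (induction qs)
  case (Cons q qs)
  have "lk (q*q) (M+M) = lk q M * lk q M" using Cons.prems by (simp add: KL[OF e])
  then show ?case using Cons by (simp add: lookup_add power2_eq_square)
qed simp

lemma sum_list_sq_ge: "q \<in> set qs \<Longrightarrow> (f q)^2 \<le> sum_list (map (\<lambda>q. (f q :: real)^2) qs)"
proof (induction qs)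
  case (Cons a qs)
  have "0 \<le> sum_list (map (\<lambda>q. (f q)^2) qs)" by (induction qs) auto
  with Cons show ?case by (cases "q = a") (auto intro: add_increasing)
qed simp

lemma exists_inj_nat: "\<exists>e::'v::finite \<Rightarrow> nat. inj e"
  using finite_imp_inj_to_nat_seg[of "UNIV::'v set"] by auto

lemma max_key:
  assumes "finite K" "K \<noteq> {}"
  shows "\<exists>M\<in>K. \<forall>b\<in>K. psi e b \<le> psi e M"
proof -
  have "Max (psi e ` K) \<in> psi e ` K" using assms by simp
  then obtain M where "M \<in> K" "psi e M = Max (psi e ` K)" by auto
  then show ?thesis using assms by (metis Max_ge finite_imageI imageI)
qed

lemma LB:
  fixes qs :: "(('v::finite \<Rightarrow>\<^sub>0 nat) \<Rightarrow>\<^sub>0 real) list"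
  assumes "q \<in> set qs" "q \<noteq> 0" "h \<noteq> 0"
  shows "2 * pdeg q + pdeg h \<le> pdeg (sum_list (map (\<lambda>q. q*q) qs) * h)"
proof -
  obtain e :: "'v \<Rightarrow> nat" where e: "inj e" using exists_inj_nat by blast
  define K where "K = (\<Union>q\<in>set qs. ks q)"
  have "finite K" unfolding K_def by auto
  moreover have "ks q \<noteq> {}" using assms(2) by (metis in_keys_iff poly_mapping_eqI lookup_zero empty_iff)
  ultimately obtain M where M: "M \<in> K" "\<forall>b\<in>K. psi e b \<le> psi e M"
    using max_key[of K e] assms(1) unfolding K_def by blast
  have hk: "ks h \<noteq> {}" using assms(3) by (metis in_keys_iff poly_mapping_eqI lookup_zero empty_iff)
  obtain Mh where Mh: "Mh \<in> ks h" "\<forall>b\<in>ks h. psi e b \<le> psi e Mh"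
    using max_key[of "ks h" e] hk by auto
  define \<sigma> where "\<sigma> = sum_list (map (\<lambda>q. q*q) qs)"
  have allM: "\<forall>q\<in>set qs. \<forall>b\<in>ks q. psi e b \<le> psi e M" using M(2) unfolding K_def by auto
  obtain q' where q': "q' \<in> set qs" "M \<in> ks q'" using M(1) unfolding K_def by auto
  have "(lk q' M)^2 \<le> lk \<sigma> (M+M)"
    unfolding \<sigma>_def sos_top[OF e allM] by (rule sum_list_sq_ge[OF q'(1)])
  moreover have "0 < (lk q' M)^2" using q'(2) by (simp add: in_keys_iff)
  ultimately have s0: "lk \<sigma> (M+M) \<noteq> 0" by linarith
  have "lk (\<sigma>*h) (M+M+Mh) = lk \<sigma> (M+M) * lk h Mh"
    by (rule KL[OF e]) (use sos_keys[OF allM] Mh in \<open>auto simp: \<sigma>_def\<close>)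
  also have "\<dots> \<noteq> 0" using s0 Mh(1) by (simp add: in_keys_iff)
  finally have "M+M+Mh \<in> ks (\<sigma>*h)" by (simp add: in_keys_iff)
  then have "mdeg (M+M+Mh) \<le> pdeg (\<sigma>*h)" by (rule mdeg_le_pdeg)
  moreover have "pdeg q \<le> mdeg M"
    unfolding pdeg_le_iff using allM assms(1) psi_le_mdeg by blast
  moreover have "pdeg h \<le> mdeg Mh"
    unfolding pdeg_le_iff using Mh(2) psi_le_mdeg by blast
  ultimately show ?thesis by (simp add: mdeg_add \<sigma>_def)
qed


definition mev :: "('v::finite \<Rightarrow>\<^sub>0 nat) \<Rightarrow> ('v \<Rightarrow> real) \<Rightarrow> real" where
  "mev a z = (\<Prod>i\<in>UNIV. z i ^ lk a i)"

lemma peval_riesz: "peval p z = riesz (\<lambda>a. mev a z) p"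
  unfolding peval_def riesz_def mev_def
proof (intro sum.cong refl arg_cong2[where f="(*)"])
  fix a :: "'a \<Rightarrow>\<^sub>0 nat"
  show "(\<Prod>i\<in>ks a. z i ^ lk a i) = (\<Prod>i\<in>UNIV. z i ^ lk a i)"
    by (rule prod.mono_neutral_left) (auto simp: in_keys_iff)
qed

lemma mev_add: "mev (a + b) z = mev a z * mev b z"
  unfolding mev_def by (simp add: lookup_add power_add prod.distrib)

lemma mev_single: "mev (sg i n) z = z i ^ n"
proof -
  have "mev (sg i n) z = (\<Prod>j\<in>UNIV. if i = j then z j ^ n else 1)"
    unfolding mev_def by (intro prod.cong refl) (simp add: lk_single)
  also have "\<dots> = z i ^ n" by simp
  finally show ?thesis .
qed

lemma mev_zero[simp]: "mev 0 z = 1"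
  by (simp add: mev_def)

lemma mev_scale: "mev a (\<lambda>i. c * z i) = c ^ mdeg a * mev a z"
proof -
  have "mdeg a = (\<Sum>i\<in>UNIV. lk a i)" by (rule mdeg_superset) auto
  then show ?thesis
    unfolding mev_def by (simp add: power_mult_distrib prod.distrib power_sum)
qed

lemma peval_homogeneous:
  fixes p :: "('v::finite \<Rightarrow>\<^sub>0 nat) \<Rightarrow>\<^sub>0 real"
  assumes "\<forall>a\<in>ks p. mdeg a = d"
  shows "peval p (\<lambda>i. c * z i) = c ^ d * peval p z"
  unfolding peval_riesz riesz_def using assms
  by (simp add: mev_scale sum_distrib_left mult_ac)

lemma riesz_pvar: "riesz y (pvar i) = y (sg i 1)"
  by (simp add: pvar_def riesz_single)

lemma peval_pvar: "peval (pvar (i::'v::finite)) z = z i"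
  by (simp add: peval_riesz riesz_pvar mev_single)

lemma sqnorm_eq: "sqnorm = (\<Sum>i\<in>UNIV. sg (sg i 2) 1)"
  unfolding sqnorm_def pvar_def by (simp add: mult_single single_add[symmetric] numeral_2_eq_2)

lemma sg2_inj: "sg i (2::nat) = sg j 2 \<longleftrightarrow> i = j"
  by (metis lk_single zero_neq_numeral)

lemma sg2_nz: "sg i (2::nat) \<noteq> 0"
  by (metis lk_single lookup_zero zero_neq_numeral)

lemma peval_sqnorm: "peval sqnorm z = (\<Sum>i\<in>UNIV. (z i)^2)"
  by (simp add: sqnorm_eq peval_riesz riesz_sum riesz_single mev_single)

lemma lk_sqnorm_None: "lk (sqnorm :: 'n::finite option mpoly) (sg None 2) = 1"
proof -
  have "lk (sqnorm :: 'n option mpoly) (sg None 2) = (\<Sum>i\<in>(UNIV::'n option set). if i = None then 1 else 0)"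
    by (simp add: sqnorm_eq lookup_sum lk_single sg2_inj)
  also have "\<dots> = 1" by (simp add: sum.delta)
  finally show ?thesis .
qed

lemma pdeg_sqnorm_m1: "2 \<le> pdeg ((sqnorm :: 'n::finite option mpoly) - 1)"
proof -
  have "lk ((sqnorm :: 'n option mpoly) - 1) (sg None 2) = 1"
    using sg2_nz[of None] by (simp add: lookup_minus lk_sqnorm_None lookup_one when_def)
  then have "sg None 2 \<in> ks ((sqnorm :: 'n option mpoly) - 1)" by (simp add: in_keys_iff)
  from mdeg_le_pdeg[OF this] show ?thesis by simp
qed

lemma pdeg_sqnorm_le: "pdeg (sqnorm :: 'n::finite option mpoly) \<le> 2"
  unfolding pdeg_le_iff sqnorm_eq
proof
  fix a assume "a \<in> ks (\<Sum>i\<in>UNIV. sg (sg i (2::nat)) (1::real) :: 'n option mpoly)"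
  then show "mdeg a \<le> 2" using keys_sum_sub by fastforce
qed

lemma pdeg_sqnorm_m1_le: "pdeg ((sqnorm :: 'n::finite option mpoly) - 1) \<le> 2"
proof -
  have "pdeg ((sqnorm :: 'n option mpoly) - 1) \<le> max (pdeg (sqnorm :: 'n option mpoly)) (pdeg (1 :: 'n option mpoly))"
    by (rule pdeg_diff_le)
  then show ?thesis using pdeg_sqnorm_le[where 'n='n] by simp
qed

lemma pdeg_pvar: "pdeg (pvar i) = 1"
proof -
  have "sg i 1 \<in> ks (pvar i)" by (simp add: pvar_def)
  then have "1 \<le> pdeg (pvar i)" using mdeg_le_pdeg by fastforce
  moreover have "pdeg (pvar i) \<le> 1" unfolding pvar_def using pdeg_single_le[of "sg i 1" 1] by simp
  ultimately show ?thesis by simp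
qed

section \<open>Homogenization\<close>

lemma lk_None: "None \<notin> ks a \<Longrightarrow> lk (a + sg None e) None = e"
  by (simp add: lookup_add lk_single in_keys_iff)

lemma homog_keys:
  assumes "b \<in> ks (homog f)"
  shows "mdeg b = pdeg f"
proof -
  have "ks (homog f) \<subseteq> (\<Union>a\<in>ks f. ks (sg (a + sg None (pdeg f - mdeg a)) (lk f a)))"
    unfolding homog_def by (rule keys_sum_sub)
  with assms obtain a where a: "a \<in> ks f" "b \<in> ks (sg (a + sg None (pdeg f - mdeg a)) (lk f a))"
    by blast
  then have "b = a + sg None (pdeg f - mdeg a)" by (simp split: if_splits)
  moreover have "mdeg a \<le> pdeg f" using a(1) by (rule mdeg_le_pdeg)
  ultimately show ?thesis by (simp add: mdeg_add)
qed

lemma pdeg_homog_le: "pdeg (homog f) \<le> pdeg f"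
  unfolding pdeg_le_iff by (auto dest: homog_keys)

lemma pdeg_attained: "f \<noteq> 0 \<Longrightarrow> \<exists>a\<in>ks f. mdeg a = pdeg f"
proof -
  assume "f \<noteq> 0"
  then have ne: "ks f \<noteq> {}" by simp
  have "pdeg f = Max (mdeg ` ks f)"
    unfolding pdeg_def using ne by (simp add: Max_insert)
  moreover have "Max (mdeg ` ks f) \<in> mdeg ` ks f" using ne by simp
  ultimately show ?thesis by auto
qed

lemma pdeg_homog:
  assumes "in_X f"
  shows "pdeg (homog f) = pdeg f"
proof (cases "f = 0")
  case True
  then show ?thesis by (simp add: homog_def)
next
  case False
  let ?d = "pdeg f"
  obtain a where a: "a \<in> ks f" "mdeg a = ?d" using pdeg_attained[OF False] by blast
  have eq: "a' + sg None (?d - mdeg a') = a \<longleftrightarrow> a' = a" if "a' \<in> ks f" for a'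
  proof
    assume h: "a' + sg None (?d - mdeg a') = a"
    have "None \<notin> ks a'" "None \<notin> ks a" using assms that a(1) unfolding in_X_def by auto
    then have "?d - mdeg a' = 0" using h lk_None[of a' "?d - mdeg a'"] by (simp add: in_keys_iff)
    with h show "a' = a" by simp
  qed (use a in simp)
  have "lk (homog f) a = (\<Sum>a'\<in>ks f. if a' + sg None (?d - mdeg a') = a then lk f a' else 0)"
    unfolding homog_def by (simp add: lookup_sum lk_single)
  also have "\<dots> = (\<Sum>a'\<in>ks f. if a' = a then lk f a' else 0)"
    by (intro sum.cong refl) (simp add: eq)
  also have "\<dots> = lk f a" using a(1) by simp
  finally have "a \<in> ks (homog f)" using a(1) by (simp add: in_keys_iff)
  then have "?d \<le> pdeg (homog f)" using mdeg_le_pdeg a(2) by metis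
  with pdeg_homog_le[of f] show ?thesis by simp
qed

lemma homog_zero_iff: "in_X f \<Longrightarrow> homog f = 0 \<Longrightarrow> pdeg f = 0"
  using pdeg_homog[of f] by simp

lemma peval_homog_hpt:
  fixes f :: "'n::finite option mpoly"
  shows "peval (homog f) (hpt s) = peval f (hpt s)"
proof -
  have "peval (homog f) (hpt s) = (\<Sum>a\<in>ks f. lk f a * mev (a + sg None (pdeg f - mdeg a)) (hpt s))"
    unfolding homog_def peval_riesz by (simp add: riesz_sum riesz_single)
  also have "\<dots> = (\<Sum>a\<in>ks f. lk f a * mev a (hpt s))"
    by (simp add: mev_add mev_single hpt_def)
  also have "\<dots> = peval f (hpt s)" by (simp add: peval_riesz riesz_def)
  finally show ?thesis .
qed


lemma QF_nonneg:
  fixes q :: "('v::finite \<Rightarrow>\<^sub>0 nat) \<Rightarrow>\<^sub>0 real"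
  assumes "loc_psd d h y" "pdeg q \<le> d"
  shows "0 \<le> riesz y (q*q*h)"
proof -
  have ks: "ks q \<subseteq> mons d" using assms(2) by (simp add: pdeg_le_mons)
  have "riesz y (q*q*h) = (\<Sum>a\<in>mons d. \<Sum>c\<in>mons d. lk q a * locmat h y a c * lk q c)"
    by (rule riesz_QF[OF finite_mons ks])
  moreover have "0 \<le> (\<Sum>a\<in>mons d. \<Sum>c\<in>mons d. lk q a * locmat h y a c * lk q c)"
    using assms(1) unfolding loc_psd_def by (rule spec)
  ultimately show ?thesis by simp
qed

lemma QF_zero:
  fixes q :: "('v::finite \<Rightarrow>\<^sub>0 nat) \<Rightarrow>\<^sub>0 real"
  assumes "loc_zero d h y" "pdeg q \<le> d"
  shows "riesz y (q*q*h) = 0"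
proof -
  have ks: "ks q \<subseteq> mons d" using assms(2) by (simp add: pdeg_le_mons)
  have "riesz y (q*q*h) = (\<Sum>a\<in>mons d. \<Sum>c\<in>mons d. lk q a * locmat h y a c * lk q c)"
    by (rule riesz_QF[OF finite_mons ks])
  moreover have "\<forall>a\<in>mons d. \<forall>c\<in>mons d. locmat h y a c = 0"
    using assms(1) unfolding loc_zero_def .
  ultimately show ?thesis by simp
qed

lemma sum_list_sq_mult:
  "sum_list (map (\<lambda>q. q*q) qs) * h = sum_list (map (\<lambda>q. q*q*h) (qs :: 'a::comm_ring list))"
  by (induction qs) (auto simp: distrib_right)

lemma qmod_nonneg:
  assumes H: "\<forall>h\<in>set (1#G). \<forall>qs q. q \<in> set qs \<longrightarrow> pdeg (sum_list (map (\<lambda>q. q*q) qs) * h) \<le> 2*k \<longrightarrow> 0 \<le> riesz y (q*q*h)"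
    and c: "c \<in> qmodule k G"
  shows "0 \<le> riesz y c"
proof -
  from c obtain \<sigma> where c: "c = (\<Sum>j<length (1 # G). \<sigma> j * ((1 # G) ! j))"
    and \<sigma>: "\<forall>j<length (1 # G). sos (\<sigma> j) \<and> pdeg (\<sigma> j * ((1 # G) ! j)) \<le> 2 * k"
    unfolding qmodule_def by blast
  have "0 \<le> riesz y (\<sigma> j * ((1 # G) ! j))" if j: "j < length (1#G)" for j
  proof -
    let ?h = "(1 # G) ! j"
    have hin: "?h \<in> set (1#G)" using j by (rule nth_mem)
    obtain qs where qs: "\<sigma> j = sum_list (map (\<lambda>q. q*q) qs)" using \<sigma> j unfolding sos_def by blast
    have "pdeg (\<sigma> j * ?h) \<le> 2*k" using \<sigma> j by blast
    then have deg: "pdeg (sum_list (map (\<lambda>q. q*q) qs) * ?h) \<le> 2*k" unfolding qs .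
    have "riesz y (\<sigma> j * ?h) = sum_list (map (\<lambda>q. riesz y (q*q*?h)) qs)"
      unfolding qs sum_list_sq_mult riesz_sum_list by (simp add: o_def)
    also have "0 \<le> \<dots>"
      by (rule sum_list_nonneg) (use H hin deg in auto)
    finally show ?thesis .
  qed
  then show ?thesis unfolding c riesz_sum by (intro sum_nonneg) auto
qed

definition omcond :: "nat \<Rightarrow> 'n::finite option mpoly list \<Rightarrow> (('n option \<Rightarrow>\<^sub>0 nat) \<Rightarrow> real) \<Rightarrow> bool" where
  "omcond k gs y \<longleftrightarrow> loc_psd (k - 1) (pvar None) y
      \<and> loc_zero (k - 1) (sqnorm - 1) y
      \<and> loc_psd k 1 y
      \<and> (\<forall>g\<in>set gs. loc_psd (k - kdeg g) (homog g) y)"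

lemma set_Gt: "set (1 # Gtilde gs) = insert 1 (homog ` set gs \<union> {pvar None, sqnorm - 1, 1 - sqnorm})"
  by (auto simp: Gtilde_def)

lemma omega_qmod_nonneg:
  fixes gs :: "'n::finite option mpoly list"
  assumes X: "\<forall>g\<in>set gs. in_X g" and y: "omcond k gs y" and c: "c \<in> qmodule k (Gtilde gs)"
  shows "0 \<le> riesz y c"
proof (rule qmod_nonneg[OF _ c], intro ballI allI impI)
  fix h qs q
  assume h: "h \<in> set (1 # Gtilde gs)" and q: "q \<in> set qs"
    and deg: "pdeg (sum_list (map (\<lambda>q. q*q) qs) * h) \<le> 2*k"
  show "0 \<le> riesz y (q*q*h)"
  proof (cases "q = 0 \<or> h = 0")
    case True
    then show ?thesis by auto
  next
    case False
    then have lb: "2 * pdeg q + pdeg h \<le> 2*k" using LB[OF q] deg by force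
    from h consider "h = 1" | g where "g \<in> set gs" "h = homog g" | "h = pvar None"
      | "h = sqnorm - 1" | "h = 1 - sqnorm" unfolding set_Gt by blast
    then show ?thesis
    proof cases
      case 1
      then show ?thesis using y lb by (intro QF_nonneg) (auto simp: omcond_def)
    next
      case (2 g)
      have "pdeg (homog g) = pdeg g" using X 2 pdeg_homog by blast
      then have "pdeg q \<le> k - kdeg g" using lb 2 unfolding kdeg_def by simp
      then show ?thesis using y 2 by (intro QF_nonneg) (auto simp: omcond_def)
    next
      case 3
      then have "pdeg q \<le> k - 1" using lb pdeg_pvar[of "None :: 'n option"] by simp
      then show ?thesis using y 3 by (intro QF_nonneg) (auto simp: omcond_def)
    next
      case 4
      then have "pdeg q \<le> k - 1" using lb pdeg_sqnorm_m1[where 'n='n] by simp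
      then have "riesz y (q*q*h) = 0" using y 4 by (intro QF_zero) (auto simp: omcond_def)
      then show ?thesis by simp
    next
      case 5
      have "pdeg (1 - sqnorm :: 'n option mpoly) = pdeg (sqnorm - 1 :: 'n option mpoly)"
        by (metis minus_diff_eq pdeg_uminus)
      then have "pdeg q \<le> k - 1" using lb 5 pdeg_sqnorm_m1[where 'n='n] by simp
      then have "riesz y (q*q*(sqnorm - 1)) = 0" using y by (intro QF_zero) (auto simp: omcond_def)
      moreover have "q*q*h = - (q*q*(sqnorm - 1))" unfolding 5 by (simp add: algebra_simps)
      ultimately show ?thesis by (simp add: riesz_uminus)
    qed
  qed
qed


section \<open>Omega is contained in the modified theta body\<close>

lemma mdeg1:
  fixes a :: "'v::finite \<Rightarrow>\<^sub>0 nat"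
  assumes "mdeg a = 1"
  shows "\<exists>i. a = sg i 1"
proof -
  have md: "mdeg a = (\<Sum>j\<in>UNIV. lk a j)" by (rule mdeg_superset) auto
  have "a \<noteq> 0" using assms by auto
  then obtain i where i: "lk a i \<noteq> 0" by (metis lookup_zero poly_mapping_eqI)
  have "lk a i \<le> 1" using lk_le_mdeg[of a i] assms by simp
  with i have i1: "lk a i = 1" by simp
  have "lk a j = 0" if "j \<noteq> i" for j
  proof -
    have "(\<Sum>l\<in>{i,j}. lk a l) \<le> (\<Sum>l\<in>UNIV. lk a l)" by (rule sum_mono2) auto
    then show ?thesis using that i1 assms md by simp
  qed
  then have "a = sg i 1" using i1 by (intro poly_mapping_eqI) (auto simp: lk_single)
  then show ?thesis ..
qed

lemma riesz_eq_peval_lin: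
  fixes l :: "'n::finite option mpoly"
  assumes l: "l \<in> linforms" and y0: "riesz y (pvar None) = 1" and yx: "\<forall>i. riesz y (pvar (Some i)) = x $ i"
  shows "riesz y l = peval l (hpt x)"
proof -
  have "y a = mev a (hpt x)" if "a \<in> ks l" for a
  proof -
    have "mdeg a = 1" using l that unfolding linforms_def by blast
    then obtain i where a: "a = sg i 1" using mdeg1 by blast
    show ?thesis
    proof (cases i)
      case None
      then show ?thesis using y0 a by (simp add: riesz_pvar mev_single hpt_def)
    next
      case (Some j)
      then show ?thesis using yx a by (simp add: riesz_pvar mev_single hpt_def)
    qed
  qed
  then show ?thesis unfolding peval_riesz riesz_def by simp
qed

lemma omega_sub_modTH:
  fixes gs :: "'n::finite option mpoly list"
  assumes X: "\<forall>g\<in>set gs. in_X g"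
  shows "Omega k gs \<subseteq> modTH k (Gtilde gs)"
proof
  fix x assume "x \<in> Omega k gs"
  then obtain y where y0: "riesz y (pvar None) = 1" and yx: "\<forall>i. riesz y (pvar (Some i)) = x $ i"
    and oc: "omcond k gs y"
    unfolding Omega_def omcond_def by blast
  show "x \<in> modTH k (Gtilde gs)"
    unfolding modTH_def
  proof (intro CollectI ballI)
    fix l assume l: "l \<in> qmodule k (Gtilde gs) \<inter> linforms"
    have "0 \<le> riesz y l" using omega_qmod_nonneg[OF X oc] l by blast
    also have "riesz y l = peval l (hpt x)" using riesz_eq_peval_lin[OF _ y0 yx] l by blast
    finally show "0 \<le> peval l (hpt x)" .
  qed
qed

lemma cont_hpt: "continuous_on UNIV (\<lambda>x::real^'n. hpt x i)"
  by (cases i) (auto simp: hpt_def intro!: continuous_intros)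

lemma cont_peval_hpt: "continuous_on UNIV (\<lambda>x::real^'n. peval p (hpt x))"
  unfolding peval_def by (intro continuous_intros cont_hpt)

lemma modTH_closed: "closed (modTH k G)"
proof -
  have "modTH k G = (\<Inter>l\<in>qmodule k G \<inter> linforms. {x. 0 \<le> peval l (hpt x)})"
    unfolding modTH_def by auto
  also have "closed \<dots>"
    by (intro closed_INT ballI closed_Collect_le continuous_on_const cont_peval_hpt)
  finally show ?thesis .
qed

lemma closure_omega_sub:
  fixes gs :: "'n::finite option mpoly list"
  assumes X: "\<forall>g\<in>set gs. in_X g"
  shows "closure (Omega k gs) \<subseteq> modTH k (Gtilde gs)"
  by (rule closure_minimal[OF omega_sub_modTH[OF X] modTH_closed])

section \<open>Bipolar\<close>

lemma var_lemma:
  fixes A B :: real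
  assumes H: "\<forall>t. 0 < t \<and> t \<le> 1 \<longrightarrow> 0 \<le> 2*t*A + t^2*B" and B: "0 \<le> B"
  shows "0 \<le> A"
proof (rule ccontr)
  assume "\<not> 0 \<le> A"
  then have A: "A < 0" by simp
  define t where "t = min 1 (-A/(B+1))"
  have "0 < -A/(B+1)" using A B by (intro divide_pos_pos) auto
  then have t0: "0 < t" by (simp add: t_def)
  have t1: "t \<le> 1" by (simp add: t_def)
  have "t \<le> (-A)/(B+1)" by (simp add: t_def)
  then have "t * (B+1) \<le> ((-A)/(B+1)) * (B+1)" using B by (intro mult_right_mono) auto
  also have "((-A)/(B+1)) * (B+1) = -A" using B by simp
  finally have "t * (B+1) \<le> -A" .
  then have "t * B < -A" using t0 by (simp add: algebra_simps)
  then have "2*A + t*B < 0" using A by linarith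
  then have "t * (2*A + t*B) < 0" using t0 by (simp add: mult_pos_neg)
  moreover have "0 \<le> 2*t*A + t^2*B" using H t0 t1 by blast
  ultimately show False by (simp add: power2_eq_square algebra_simps)
qed

lemma abs_le_sq1: "\<bar>x::real\<bar> \<le> x^2 + 1"
proof (cases "\<bar>x\<bar> \<le> 1")
  case True
  then show ?thesis using zero_le_power2[of x] by linarith
next
  case False
  have "\<bar>x\<bar> * 1 \<le> \<bar>x\<bar> * \<bar>x\<bar>" using False by (intro mult_left_mono) auto
  also have "\<bar>x\<bar> * \<bar>x\<bar> = x^2" by (simp add: power2_eq_square abs_mult_self_eq)
  finally show ?thesis by simp
qed

lemma subseq_conv:
  fixes F :: "nat \<Rightarrow> 'a \<Rightarrow> real"
  assumes "finite N" "\<forall>j. \<forall>a\<in>N. \<bar>F j a\<bar> \<le> B"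
  shows "\<exists>r L. strict_mono r \<and> (\<forall>a\<in>N. (\<lambda>j. F (r j) a) \<longlonglongrightarrow> L a)"
  using assms
proof (induction N rule: finite_induct)
  case empty
  show ?case using strict_mono_id by blast
next
  case (insert x N)
  then obtain r L where r: "strict_mono r" "\<forall>a\<in>N. (\<lambda>j. F (r j) a) \<longlonglongrightarrow> L a" by auto
  have "bounded (range (\<lambda>j. F (r j) x))"
    unfolding bounded_iff using insert.prems by auto
  then obtain l s where s: "strict_mono s" "((\<lambda>j. F (r j) x) \<circ> s) \<longlonglongrightarrow> l"
    using bounded_imp_convergent_subsequence by blast
  have "strict_mono (r \<circ> s)" using r(1) s(1) by (rule strict_mono_o)
  moreover have "\<forall>a\<in>insert x N. (\<lambda>j. F ((r \<circ> s) j) a) \<longlonglongrightarrow> (L(x := l)) a"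
  proof
    fix a assume a: "a \<in> insert x N"
    show "(\<lambda>j. F ((r \<circ> s) j) a) \<longlonglongrightarrow> (L(x := l)) a"
    proof (cases "a = x")
      case True
      then show ?thesis using s(2) by (simp add: o_def)
    next
      case False
      then have "a \<in> N" using a by simp
      then have "((\<lambda>j. F (r j) a) \<circ> s) \<longlonglongrightarrow> L a"
        using r(2) s(1) LIMSEQ_subseq_LIMSEQ by blast
      then show ?thesis using False by (simp add: o_def)
    qed
  qed
  ultimately show ?case by blast
qed

lemma bipolar:
  fixes C :: "('a \<Rightarrow>\<^sub>0 real) set"
  assumes N: "finite N"
    and CN: "\<forall>c\<in>C. ks c \<subseteq> N"
    and pN: "ks p \<subseteq> N"
    and C0: "0 \<in> C"
    and Cadd: "\<forall>c\<in>C. \<forall>d\<in>C. c + d \<in> C"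
    and Csc: "\<forall>c\<in>C. \<forall>r\<ge>0. \<exists>c'\<in>C. \<forall>a. lk c' a = r * lk c a"
    and Ccl: "\<forall>ps q. (\<forall>j. ps j \<in> C) \<and> ks q \<subseteq> N \<and> (\<forall>a. (\<lambda>j. lk (ps j) a) \<longlonglongrightarrow> lk q a) \<longrightarrow> q \<in> C"
    and pC: "p \<notin> C"
  shows "\<exists>y. (\<forall>c\<in>C. 0 \<le> (\<Sum>a\<in>N. y a * lk c a)) \<and> (\<Sum>a\<in>N. y a * lk p a) < 0"
proof -
  define f where "f c = (\<Sum>a\<in>N. (lk p a - lk c a)^2)" for c
  have f0: "0 \<le> f c" for c unfolding f_def by (intro sum_nonneg) auto
  define m where "m = Inf (f ` C)"
  have bdd: "bdd_below (f ` C)" using f0 by (intro bdd_belowI[of _ 0]) auto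
  have ne: "f ` C \<noteq> {}" using C0 by auto
  have "\<forall>j. \<exists>c\<in>C. f c < m + inverse (real (Suc j))"
  proof
    fix j
    have "Inf (f ` C) < m + inverse (real (Suc j))" unfolding m_def by simp
    then obtain v where "v \<in> f ` C" "v < m + inverse (real (Suc j))" using cInf_lessD[OF ne] by blast
    then show "\<exists>c\<in>C. f c < m + inverse (real (Suc j))" by auto
  qed
  then obtain cs where cs: "\<forall>j. cs j \<in> C \<and> f (cs j) < m + inverse (real (Suc j))"
    by metis
  have m0: "m \<le> f c" if "c \<in> C" for c unfolding m_def using bdd that by (simp add: cInf_lower)
  define B where "B = (\<Sum>a\<in>N. \<bar>lk p a\<bar>) + m + 2"
  have bound: "\<bar>lk (cs j) a\<bar> \<le> B" if a: "a \<in> N" for j a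
  proof -
    have "(lk p a - lk (cs j) a)^2 \<le> f (cs j)"
      unfolding f_def by (rule member_le_sum) (use a N in auto)
    also have "\<dots> \<le> m + 1"
    proof -
      have "inverse (real (Suc j)) \<le> 1" by (simp add: inverse_le_1_iff)
      then show ?thesis using cs[rule_format, of j] by linarith
    qed
    finally have "(lk p a - lk (cs j) a)^2 \<le> m + 1" .
    moreover have "\<bar>lk p a - lk (cs j) a\<bar> \<le> (lk p a - lk (cs j) a)^2 + 1"
      by (rule abs_le_sq1)
    moreover have "\<bar>lk p a\<bar> \<le> (\<Sum>a\<in>N. \<bar>lk p a\<bar>)" by (rule member_le_sum) (use a N in auto)
    ultimately show ?thesis unfolding B_def by linarith
  qed
  obtain r L where r: "strict_mono r" and L: "\<forall>a\<in>N. (\<lambda>j. lk (cs (r j)) a) \<longlonglongrightarrow> L a"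
  proof -
    have "\<forall>j. \<forall>a\<in>N. \<bar>lk (cs j) a\<bar> \<le> B" using bound by blast
    from subseq_conv[OF N this] show ?thesis using that by blast
  qed
  define q where "q = (\<Sum>a\<in>N. sg a (L a))"
  have lkq: "lk q a = (if a \<in> N then L a else 0)" for a
    unfolding q_def using N by (simp add: lookup_sum lk_single)
  have qN: "ks q \<subseteq> N" by (auto simp: in_keys_iff lkq split: if_splits)
  have conv: "(\<lambda>j. lk (cs (r j)) a) \<longlonglongrightarrow> lk q a" for a
  proof (cases "a \<in> N")
    case True
    then show ?thesis using L by (simp add: lkq)
  next
    case False
    have "lk (cs (r j)) a = 0" for j
    proof -
      have "ks (cs (r j)) \<subseteq> N" using CN cs by blast
      then have "a \<notin> ks (cs (r j))" using False by blast
      then show ?thesis by (simp add: in_keys_iff)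
    qed
    then show ?thesis using False by (simp add: lkq)
  qed
  have "(\<forall>j. (cs \<circ> r) j \<in> C) \<and> ks q \<subseteq> N \<and> (\<forall>a. (\<lambda>j. lk ((cs \<circ> r) j) a) \<longlonglongrightarrow> lk q a)"
    using cs qN conv by simp
  then have qC: "q \<in> C" using Ccl by blast
  have "(\<lambda>j. f (cs (r j))) \<longlonglongrightarrow> f q"
    unfolding f_def by (intro tendsto_intros conv)
  moreover have "(\<lambda>j. f (cs (r j))) \<longlonglongrightarrow> m"
  proof (rule tendsto_sandwich[of "\<lambda>j. m" _ _ "\<lambda>j. m + inverse (real (Suc j))"])
    show "\<forall>\<^sub>F j in sequentially. m \<le> f (cs (r j))" using m0 cs by auto
    have "f (cs (r j)) \<le> m + inverse (real (Suc j))" for j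
    proof -
      have "f (cs (r j)) < m + inverse (real (Suc (r j)))" using cs by blast
      moreover have "inverse (real (Suc (r j))) \<le> inverse (real (Suc j))"
        using seq_suble[OF r, of j] by (simp add: le_imp_inverse_le)
      ultimately show ?thesis by linarith
    qed
    then show "\<forall>\<^sub>F j in sequentially. f (cs (r j)) \<le> m + inverse (real (Suc j))" by auto
    show "(\<lambda>j. m) \<longlonglongrightarrow> m" by simp
    show "(\<lambda>j. m + inverse (real (Suc j))) \<longlonglongrightarrow> m"
      using tendsto_add[OF tendsto_const LIMSEQ_inverse_real_of_nat, of m] by simp
  qed
  ultimately have fq: "f q = m" by (rule LIMSEQ_unique)
  define d where "d a = lk p a - lk q a" for a
  define ip where "ip u v = (\<Sum>a\<in>N. u a * v a)" for u v :: "'a \<Rightarrow> real"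
  have fexp: "(\<Sum>a\<in>N. (d a - t * u a)^2) = f q - 2 * t * ip d u + t^2 * ip u u" for t u
  proof -
    have "(\<Sum>a\<in>N. (d a - t * u a)^2) = (\<Sum>a\<in>N. (d a)^2 - 2 * t * (d a * u a) + t^2 * (u a * u a))"
      by (intro sum.cong refl) (simp add: power2_eq_square algebra_simps)
    also have "\<dots> = (\<Sum>a\<in>N. (d a)^2) - 2 * t * ip d u + t^2 * ip u u"
      unfolding ip_def by (simp add: sum.distrib sum_subtractf sum_distrib_left)
    also have "(\<Sum>a\<in>N. (d a)^2) = f q" unfolding f_def d_def ..
    finally show ?thesis .
  qed
  have ipnn: "0 \<le> ip u u" for u unfolding ip_def by (intro sum_nonneg) auto
  have c_side: "ip d (lk c) \<le> 0" if c: "c \<in> C" for c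
  proof -
    have "0 \<le> 2 * t * (- ip d (lk c)) + t^2 * ip (lk c) (lk c)" if t: "0 < t \<and> t \<le> 1" for t
    proof -
      obtain c' where c': "c' \<in> C" "\<forall>a. lk c' a = t * lk c a" using Csc c t by (meson less_imp_le)
      have qc: "q + c' \<in> C" using Cadd qC c' by blast
      have "f q \<le> f (q + c')" using m0[OF qc] fq by simp
      also have "f (q + c') = (\<Sum>a\<in>N. (d a - t * lk c a)^2)"
        unfolding f_def d_def by (intro sum.cong refl) (simp add: lookup_add c'(2) algebra_simps)
      finally show ?thesis unfolding fexp by simp
    qed
    then have "0 \<le> - ip d (lk c)" using var_lemma ipnn by blast
    then show ?thesis by simp
  qed
  have q_side: "0 \<le> ip d (lk q)"
  proof -
    have "0 \<le> 2 * t * ip d (lk q) + t^2 * ip (lk q) (lk q)" if t: "0 < t \<and> t \<le> 1" for t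
    proof -
      obtain c' where c': "c' \<in> C" "\<forall>a. lk c' a = (1 - t) * lk q a" using Csc qC t by (meson diff_ge_0_iff_ge)
      have "f q \<le> f c'" using m0[OF c'(1)] fq by simp
      also have "f c' = (\<Sum>a\<in>N. (d a - (-t) * lk q a)^2)"
        unfolding f_def d_def by (intro sum.cong refl) (simp add: c'(2) algebra_simps)
      finally show ?thesis unfolding fexp by simp
    qed
    then show ?thesis using var_lemma ipnn by blast
  qed
  have "p \<noteq> q" using pC qC by blast
  then obtain a0 where a0: "lk p a0 \<noteq> lk q a0" by (metis poly_mapping_eqI)
  then have a0N: "a0 \<in> N" using pN qN by (metis in_keys_iff subsetD)
  have dd: "0 < ip d d"
  proof -
    have "0 < (d a0)^2" using a0 by (simp add: d_def)
    also have "(d a0)^2 \<le> ip d d" unfolding ip_def power2_eq_square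
      by (rule member_le_sum) (use a0N N in auto)
    finally show ?thesis .
  qed
  define y where "y a = - d a" for a
  have "\<forall>c\<in>C. 0 \<le> (\<Sum>a\<in>N. y a * lk c a)"
    using c_side unfolding ip_def y_def by (simp add: sum_negf)
  moreover have "(\<Sum>a\<in>N. y a * lk p a) = - ip d d - ip d (lk q)"
    unfolding ip_def y_def d_def by (simp add: algebra_simps sum_subtractf sum.distrib sum_distrib_left)
  ultimately show ?thesis using dd q_side by (intro exI[of _ y]) auto
qed


lemma sos_zero: "sos 0" unfolding sos_def by (rule exI[of _ "[]"]) simp

lemma sos_sq: "sos (q*q)" unfolding sos_def by (rule exI[of _ "[q]"]) simp

lemma sos_add: "sos a \<Longrightarrow> sos b \<Longrightarrow> sos (a + b)"
proof -
  assume "sos a" "sos b"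
  then obtain qa qb where "a = sum_list (map (\<lambda>q. q*q) qa)" "b = sum_list (map (\<lambda>q. q*q) qb)"
    unfolding sos_def by blast
  then have "a + b = sum_list (map (\<lambda>q. q*q) (qa @ qb))" by simp
  then show ?thesis unfolding sos_def by blast
qed

lemma sum_list_smul: "c * sum_list xs = sum_list (map (\<lambda>x. c * x) (xs :: 'a::comm_ring list))"
  by (induction xs) (auto simp: distrib_left)

lemma sos_smul:
  assumes "sos a" "0 \<le> r"
  shows "sos (sg 0 r * a)"
proof -
  obtain qs where a: "a = sum_list (map (\<lambda>q. q*q) qs)" using assms(1) unfolding sos_def by blast
  let ?s = "sg 0 (sqrt r) :: 'v mpoly"
  have sq: "?s * ?s = sg 0 r" using assms(2) by (simp add: mult_single)
  have "sg 0 r * a = sum_list (map (\<lambda>q. sg 0 r * (q*q)) qs)"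
    unfolding a sum_list_smul by (simp add: o_def)
  also have "\<dots> = sum_list (map (\<lambda>q. q*q) (map (\<lambda>q. ?s * q) qs))"
  proof -
    have eqq: "sg 0 r * (q*q) = (?s * q) * (?s * q)" for q
      unfolding sq[symmetric] by (simp only: mult_ac)
    show ?thesis by (simp only: map_map o_def eqq)
  qed
  finally show ?thesis unfolding sos_def by blast
qed

lemma pdeg_const: "pdeg (sg 0 r) = 0"
  using pdeg_single_le[of 0 r] by simp

lemma pdeg_smul_le: "pdeg (sg 0 r * p) \<le> pdeg p"
  unfolding pdeg_le_iff
proof
  fix a assume "a \<in> ks (sg 0 r * p)"
  then have "a \<in> ks p" by (simp add: in_keys_iff lk_smul)
  then show "mdeg a \<le> pdeg p" by (rule mdeg_le_pdeg)
qed

lemma qmoduleI: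
  assumes "c = (\<Sum>j<length (1 # G). \<sigma> j * ((1 # G) ! j))"
    and "\<forall>j<length (1 # G). sos (\<sigma> j) \<and> pdeg (\<sigma> j * ((1 # G) ! j)) \<le> 2 * k"
  shows "c \<in> qmodule k G"
  unfolding qmodule_def using assms by blast

lemma qmod_zero: "0 \<in> qmodule k G"
  unfolding qmodule_def by (rule CollectI, rule exI[of _ "\<lambda>_. 0"]) (simp add: sos_zero)

lemma qmod_add:
  assumes "c \<in> qmodule k G" "d \<in> qmodule k G"
  shows "c + d \<in> qmodule k G"
proof -
  from assms(1) obtain \<sigma> where c: "c = (\<Sum>j<length (1 # G). \<sigma> j * ((1 # G) ! j))"
    and \<sigma>: "\<forall>j<length (1 # G). sos (\<sigma> j) \<and> pdeg (\<sigma> j * ((1 # G) ! j)) \<le> 2 * k"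
    unfolding qmodule_def by blast
  from assms(2) obtain \<tau> where d: "d = (\<Sum>j<length (1 # G). \<tau> j * ((1 # G) ! j))"
    and \<tau>: "\<forall>j<length (1 # G). sos (\<tau> j) \<and> pdeg (\<tau> j * ((1 # G) ! j)) \<le> 2 * k"
    unfolding qmodule_def by blast
  have "c + d = (\<Sum>j<length (1 # G). (\<sigma> j + \<tau> j) * ((1 # G) ! j))"
    unfolding c d by (simp add: distrib_right sum.distrib)
  moreover have "\<forall>j<length (1 # G). sos (\<sigma> j + \<tau> j) \<and> pdeg ((\<sigma> j + \<tau> j) * ((1 # G) ! j)) \<le> 2 * k"
  proof (intro allI impI conjI)
    fix j assume j: "j < length (1 # G)"
    show "sos (\<sigma> j + \<tau> j)" using \<sigma> \<tau> j sos_add by blast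
    have "pdeg ((\<sigma> j + \<tau> j) * ((1 # G) ! j)) = pdeg (\<sigma> j * ((1 # G) ! j) + \<tau> j * ((1 # G) ! j))"
      by (simp add: distrib_right)
    also have "\<dots> \<le> max (pdeg (\<sigma> j * ((1 # G) ! j))) (pdeg (\<tau> j * ((1 # G) ! j)))"
      by (rule pdeg_add_le)
    also have "\<dots> \<le> 2 * k" using \<sigma> \<tau> j by simp
    finally show "pdeg ((\<sigma> j + \<tau> j) * ((1 # G) ! j)) \<le> 2 * k" .
  qed
  ultimately show ?thesis by (rule qmoduleI)
qed

lemma qmod_smul:
  assumes "c \<in> qmodule k G" "0 \<le> r"
  shows "sg 0 r * c \<in> qmodule k G"
proof -
  from assms(1) obtain \<sigma> where c: "c = (\<Sum>j<length (1 # G). \<sigma> j * ((1 # G) ! j))"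
    and \<sigma>: "\<forall>j<length (1 # G). sos (\<sigma> j) \<and> pdeg (\<sigma> j * ((1 # G) ! j)) \<le> 2 * k"
    unfolding qmodule_def by blast
  have "sg 0 r * c = (\<Sum>j<length (1 # G). (sg 0 r * \<sigma> j) * ((1 # G) ! j))"
    unfolding c by (simp only: sum_distrib_left mult.assoc)
  moreover have "\<forall>j<length (1 # G). sos (sg 0 r * \<sigma> j) \<and> pdeg ((sg 0 r * \<sigma> j) * ((1 # G) ! j)) \<le> 2 * k"
  proof (intro allI impI conjI)
    fix j assume j: "j < length (1 # G)"
    have "sos (\<sigma> j)" using \<sigma> j by blast
    then show "sos (sg 0 r * \<sigma> j)" using assms(2) by (rule sos_smul)
    have "pdeg (sg 0 r * (\<sigma> j * ((1 # G) ! j))) \<le> pdeg (\<sigma> j * ((1 # G) ! j))"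
      by (rule pdeg_smul_le)
    moreover have "pdeg (\<sigma> j * ((1 # G) ! j)) \<le> 2*k" using \<sigma> j by blast
    ultimately have "pdeg (sg 0 r * (\<sigma> j * ((1 # G) ! j))) \<le> 2 * k" by (rule order_trans)
    then show "pdeg ((sg 0 r * \<sigma> j) * ((1 # G) ! j)) \<le> 2 * k" by (simp only: mult.assoc)
  qed
  ultimately show ?thesis by (rule qmoduleI)
qed

lemma qmod_gen:
  assumes h: "h \<in> set (1 # G)" and deg: "pdeg (q*q*h) \<le> 2*k"
  shows "q*q*h \<in> qmodule k G"
proof -
  from h obtain j where j: "j < length (1#G)" "(1#G) ! j = h" unfolding in_set_conv_nth by blast
  define \<sigma> where "\<sigma> i = (if i = j then q*q else 0)" for i
  have "(\<Sum>i<length (1 # G). \<sigma> i * ((1 # G) ! i)) = (\<Sum>i<length (1 # G). if i = j then q*q*h else 0)"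
    by (intro sum.cong refl) (simp add: \<sigma>_def j(2))
  also have "\<dots> = q*q*h" using j(1) by simp
  finally have "q*q*h = (\<Sum>i<length (1 # G). \<sigma> i * ((1 # G) ! i))" by simp
  moreover have "\<forall>i<length (1 # G). sos (\<sigma> i) \<and> pdeg (\<sigma> i * ((1 # G) ! i)) \<le> 2 * k"
  proof (intro allI impI)
    fix i assume "i < length (1 # G)"
    show "sos (\<sigma> i) \<and> pdeg (\<sigma> i * ((1 # G) ! i)) \<le> 2 * k"
    proof (cases "i = j")
      case True
      then show ?thesis using deg j(2) by (simp add: \<sigma>_def sos_sq)
    next
      case False
      then show ?thesis by (simp add: \<sigma>_def sos_zero)
    qed
  qed
  ultimately show ?thesis by (rule qmoduleI)
qed

lemma poly_of_fun:
  fixes v :: "('v::finite \<Rightarrow>\<^sub>0 nat) \<Rightarrow> real" and d :: nat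
  defines "q \<equiv> (\<Sum>a\<in>mons d. sg a (v a))"
  shows "ks q \<subseteq> mons d" "\<forall>a\<in>mons d. lk q a = v a" "pdeg q \<le> d"
proof -
  show ks: "ks q \<subseteq> mons d"
  proof
    fix b assume "b \<in> ks q"
    moreover have "ks q \<subseteq> (\<Union>a\<in>mons d. ks (sg a (v a)))" unfolding q_def by (rule keys_sum_sub)
    ultimately obtain a where a: "a \<in> mons d" "b \<in> ks (sg a (v a))" by blast
    then have "b = a" by (simp split: if_splits)
    then show "b \<in> mons d" using a(1) by simp
  qed
  show "\<forall>a\<in>mons d. lk q a = v a"
  proof
    fix a :: "'v \<Rightarrow>\<^sub>0 nat" assume "a \<in> mons d"
    have "lk q a = (\<Sum>a'\<in>mons d. if a' = a then v a' else 0)"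
      unfolding q_def by (simp only: lookup_sum lk_single)
    also have "\<dots> = v a" using \<open>a \<in> mons d\<close> by (simp add: finite_mons)
    finally show "lk q a = v a" .
  qed
  show "pdeg q \<le> d" using ks by (simp add: pdeg_le_mons)
qed

lemma dual_psd:
  fixes G :: "(('v::finite \<Rightarrow>\<^sub>0 nat) \<Rightarrow>\<^sub>0 real) list"
  assumes Y: "\<forall>c\<in>qmodule k G. 0 \<le> riesz y c" and h: "h \<in> set (1 # G)" and deg: "2*d + pdeg h \<le> 2*k"
  shows "loc_psd d h y"
  unfolding loc_psd_def
proof
  fix v :: "('v \<Rightarrow>\<^sub>0 nat) \<Rightarrow> real"
  define q where "q = (\<Sum>a\<in>mons d. sg a (v a))"
  note pq = poly_of_fun[where v=v and d=d, folded q_def]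
  have "pdeg (q*q*h) \<le> pdeg q + pdeg q + pdeg h"
    using pdeg_mult_le[of "q*q" h] pdeg_mult_le[of q q] by linarith
  also have "\<dots> \<le> 2*k" using pq(3) deg by linarith
  finally have "q*q*h \<in> qmodule k G" by (rule qmod_gen[OF h])
  then have "0 \<le> riesz y (q*q*h)" using Y by blast
  also have "riesz y (q*q*h) = (\<Sum>a\<in>mons d. \<Sum>c\<in>mons d. lk q a * locmat h y a c * lk q c)"
    by (rule riesz_QF[OF finite_mons pq(1)])
  also have "\<dots> = (\<Sum>a\<in>mons d. \<Sum>c\<in>mons d. v a * locmat h y a c * v c)"
    using pq(2) by (intro sum.cong refl) simp
  finally show "0 \<le> (\<Sum>a\<in>mons d. \<Sum>c\<in>mons d. v a * locmat h y a c * v c)" .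
qed


lemma locmat_point: "locmat h (\<lambda>a. mev a z) a c = mev a z * mev c z * peval h z"
proof -
  have "locmat h (\<lambda>a. mev a z) a c = (\<Sum>b\<in>ks h. (mev a z * mev c z) * (lk h b * mev b z))"
    unfolding locmat_def by (intro sum.cong refl) (simp add: mev_add mult_ac)
  also have "\<dots> = mev a z * mev c z * peval h z"
    unfolding peval_riesz riesz_def by (simp only: sum_distrib_left)
  finally show ?thesis .
qed

lemma QF_point:
  "(\<Sum>a\<in>A. \<Sum>c\<in>A. v a * (u a * u c * P) * v c) = (\<Sum>a\<in>A. v a * u a) * (\<Sum>c\<in>A. v c * u c) * (P::real)"
proof -
  have "(\<Sum>a\<in>A. v a * u a) * (\<Sum>c\<in>A. v c * u c) * P = (\<Sum>a\<in>A. \<Sum>c\<in>A. (v c * u c) * (v a * u a) * P)"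
    by (simp only: sum_distrib_left sum_distrib_right)
  then show ?thesis by (simp only: mult_ac)
qed

lemma loc_psd_point:
  fixes z :: "'v::finite \<Rightarrow> real"
  assumes "0 \<le> peval h z"
  shows "loc_psd d h (\<lambda>a. mev a z)"
  unfolding loc_psd_def locmat_point QF_point
  using assms by (simp add: zero_le_mult_iff)

lemma loc_zero_point:
  fixes z :: "'v::finite \<Rightarrow> real"
  assumes "peval h z = 0"
  shows "loc_zero d h (\<lambda>a. mev a z)"
  unfolding loc_zero_def locmat_point using assms by simp

lemma peval_one: "peval (1 :: ('v::finite \<Rightarrow>\<^sub>0 nat) \<Rightarrow>\<^sub>0 real) z = 1"
  by (simp add: peval_riesz riesz_def)

lemma peval_diff:
  fixes p q :: "('v::finite \<Rightarrow>\<^sub>0 nat) \<Rightarrow>\<^sub>0 real"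
  shows "peval (p - q) z = peval p z - peval q z"
  by (simp add: peval_riesz riesz_diff)

lemma point_omcond:
  fixes gs :: "'n::finite option mpoly list"
  assumes X: "\<forall>g\<in>set gs. in_X g" and s: "s \<in> semialg gs"
  shows "\<exists>z. omcond k gs (\<lambda>a. mev a z) \<and> 0 < z None"
proof -
  define w where "w = hpt s"
  define S where "S = (\<Sum>i\<in>UNIV. (w i)^2)"
  have "(w None)^2 \<le> S" unfolding S_def by (rule member_le_sum) auto
  then have S1: "1 \<le> S" by (simp add: w_def hpt_def)
  define c where "c = 1 / sqrt S"
  have c0: "0 < c" using S1 by (simp add: c_def)
  have c2: "c^2 * S = 1" using S1 by (simp add: c_def power_divide)
  define z where "z i = c * w i" for i
  have z0: "0 < z None" using c0 by (simp add: z_def w_def hpt_def)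
  have p1: "peval (pvar None) z = c" by (simp add: peval_pvar z_def w_def hpt_def)
  have psq: "peval (sqnorm - 1) z = 0"
  proof -
    have "peval sqnorm z = (\<Sum>i\<in>UNIV. c^2 * (w i)^2)" by (simp add: peval_sqnorm z_def power_mult_distrib)
    also have "\<dots> = c^2 * S" unfolding S_def by (simp add: sum_distrib_left)
    finally show ?thesis using c2 by (simp add: peval_diff peval_one)
  qed
  have pg: "0 \<le> peval (homog g) z" if g: "g \<in> set gs" for g
  proof -
    have "peval (homog g) z = c ^ pdeg g * peval (homog g) w"
      unfolding z_def by (rule peval_homogeneous) (auto dest: homog_keys)
    also have "peval (homog g) w = peval g (hpt s)" unfolding w_def by (rule peval_homog_hpt)
    finally show ?thesis using s g c0 unfolding semialg_def by simp
  qed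
  have "omcond k gs (\<lambda>a. mev a z)"
    unfolding omcond_def
    using p1 c0 psq pg peval_one[of z]
    by (auto intro!: loc_psd_point loc_zero_point)
  then show ?thesis using z0 by blast
qed

lemma locmat_lin: "locmat h (\<lambda>a. u * y1 a + v * y2 a) a c = u * locmat h y1 a c + v * locmat h y2 a c"
proof -
  have "locmat h (\<lambda>a. u * y1 a + v * y2 a) a c
      = (\<Sum>b\<in>ks h. u * (lk h b * y1 (a + c + b)) + v * (lk h b * y2 (a + c + b)))"
    unfolding locmat_def by (intro sum.cong refl) (simp add: algebra_simps)
  also have "\<dots> = u * locmat h y1 a c + v * locmat h y2 a c"
    unfolding locmat_def by (simp only: sum.distrib sum_distrib_left)
  finally show ?thesis .
qed

lemma QF_lin:
  fixes u v :: real
  shows "(\<Sum>a\<in>A. \<Sum>c\<in>A. w a * (u * M1 a c + v * M2 a c) * w c)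
    = u * (\<Sum>a\<in>A. \<Sum>c\<in>A. w a * M1 a c * w c) + v * (\<Sum>a\<in>A. \<Sum>c\<in>A. w a * M2 a c * w c)"
proof -
  have "(\<Sum>a\<in>A. \<Sum>c\<in>A. w a * (u * M1 a c + v * M2 a c) * w c)
      = (\<Sum>a\<in>A. \<Sum>c\<in>A. u * (w a * M1 a c * w c) + v * (w a * M2 a c * w c))"
    by (intro sum.cong refl) (simp add: algebra_simps)
  also have "\<dots> = u * (\<Sum>a\<in>A. \<Sum>c\<in>A. w a * M1 a c * w c) + v * (\<Sum>a\<in>A. \<Sum>c\<in>A. w a * M2 a c * w c)"
    by (simp only: sum.distrib sum_distrib_left)
  finally show ?thesis .
qed

lemma loc_psd_lin:
  assumes "loc_psd d h y1" "loc_psd d h y2" "0 \<le> u" "0 \<le> v"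
  shows "loc_psd d h (\<lambda>a. u * y1 a + v * y2 a)"
  using assms unfolding loc_psd_def locmat_lin QF_lin by simp

lemma loc_zero_lin:
  assumes "loc_zero d h y1" "loc_zero d h y2"
  shows "loc_zero d h (\<lambda>a. u * y1 a + v * y2 a)"
  using assms unfolding loc_zero_def locmat_lin by simp

lemma omcond_lin:
  assumes "omcond k gs y1" "omcond k gs y2" "0 \<le> u" "0 \<le> v"
  shows "omcond k gs (\<lambda>a. u * y1 a + v * y2 a)"
  using assms unfolding omcond_def by (auto intro!: loc_psd_lin loc_zero_lin)

lemma Omega_iff: "x \<in> Omega k gs \<longleftrightarrow> (\<exists>y. riesz y (pvar None) = 1 \<and> (\<forall>i. riesz y (pvar (Some i)) = x $ i) \<and> omcond k gs y)"
  unfolding Omega_def omcond_def by auto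

lemma convex_Omega: "convex (Omega k gs)"
  unfolding convex_def
proof (intro ballI allI impI)
  fix x1 x2 and u v :: real
  assume x1: "x1 \<in> Omega k gs" and x2: "x2 \<in> Omega k gs" and uv0: "0 \<le> u" "0 \<le> v" and uv1: "u + v = 1"
  obtain y1 where y1: "riesz y1 (pvar None) = 1" "\<forall>i. riesz y1 (pvar (Some i)) = x1 $ i" "omcond k gs y1"
    using x1 Omega_iff by blast
  obtain y2 where y2: "riesz y2 (pvar None) = 1" "\<forall>i. riesz y2 (pvar (Some i)) = x2 $ i" "omcond k gs y2"
    using x2 Omega_iff by blast
  let ?y = "\<lambda>a. u * y1 a + v * y2 a"
  have "riesz ?y (pvar None) = 1" using y1 y2 uv1 by (simp add: riesz_lin_y)
  moreover have "\<forall>i. riesz ?y (pvar (Some i)) = (u *\<^sub>R x1 + v *\<^sub>R x2) $ i"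
    using y1 y2 by (simp add: riesz_lin_y)
  moreover have "omcond k gs ?y" using y1(3) y2(3) uv0 by (rule omcond_lin)
  ultimately show "u *\<^sub>R x1 + v *\<^sub>R x2 \<in> Omega k gs" unfolding Omega_iff by blast
qed

lemma delta_sum_r: "finite A \<Longrightarrow> b \<in> A \<Longrightarrow> (\<Sum>w\<in>A. f w * (if w = b then 1 else 0)) = (f b :: real)"
proof -
  assume "finite A" "b \<in> A"
  have "(\<Sum>w\<in>A. f w * (if w = b then 1 else 0)) = (\<Sum>w\<in>A. if w = b then f w else 0)"
    by (intro sum.cong refl) simp
  also have "\<dots> = f b" using \<open>finite A\<close> \<open>b \<in> A\<close> by simp
  finally show ?thesis .
qed

lemma delta_sum_l: "finite A \<Longrightarrow> b \<in> A \<Longrightarrow> (\<Sum>w\<in>A. (if w = b then 1 else 0) * f w) = (f b :: real)"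
  using delta_sum_r[of A b f] by (simp add: mult.commute)

lemma delta_QF:
  assumes "finite A" "p \<in> A" "q \<in> A"
  shows "(\<Sum>x\<in>A. \<Sum>w\<in>A. (if x = p then 1 else 0) * M x w * (if w = q then 1 else 0)) = (M p q :: real)"
proof -
  have "(\<Sum>x\<in>A. \<Sum>w\<in>A. (if x = p then 1 else 0) * M x w * (if w = q then 1 else 0))
      = (\<Sum>x\<in>A. (if x = p then 1 else 0) * M x q)"
    by (intro sum.cong refl, rule delta_sum_r) (use assms in auto)
  also have "\<dots> = M p q" by (rule delta_sum_l) (use assms in auto)
  finally show ?thesis .
qed

lemma QF0:
  fixes M :: "'a \<Rightarrow> 'a \<Rightarrow> real"
  assumes A: "finite A" and sym: "\<forall>a c. M a c = M c a"
    and Q: "\<forall>v. (\<Sum>a\<in>A. \<Sum>c\<in>A. v a * M a c * v c) = 0" and a: "a \<in> A" and c: "c \<in> A"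
  shows "M a c = 0"
proof -
  have diag: "M b b = 0" if b: "b \<in> A" for b
    using Q delta_QF[OF A b b, of M] by metis
  define da where "da x = (if x = a then 1 else (0::real))" for x
  define dc where "dc x = (if x = c then 1 else (0::real))" for x
  have "(\<Sum>x\<in>A. \<Sum>w\<in>A. (da x + dc x) * M x w * (da w + dc w))
      = (\<Sum>x\<in>A. \<Sum>w\<in>A. da x * M x w * da w) + (\<Sum>x\<in>A. \<Sum>w\<in>A. da x * M x w * dc w)
      + (\<Sum>x\<in>A. \<Sum>w\<in>A. dc x * M x w * da w) + (\<Sum>x\<in>A. \<Sum>w\<in>A. dc x * M x w * dc w)"
  proof -
    have "(da x + dc x) * M x w * (da w + dc w)
        = da x * M x w * da w + da x * M x w * dc w + dc x * M x w * da w + dc x * M x w * dc w" for x w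
      by (simp add: algebra_simps)
    then show ?thesis by (simp only: sum.distrib)
  qed
  also have "\<dots> = M a a + M a c + M c a + M c c"
    unfolding da_def dc_def using delta_QF[OF A] a c by simp
  finally have "0 = M a a + M a c + M c a + M c c" using Q by metis
  then show ?thesis using diag[OF a] diag[OF c] sym by simp
qed


section \<open>The dual direction\<close>

lemma locmat_uminus: "locmat (- h) y a c = - locmat h y a c"
  unfolding locmat_def by (simp add: sum_negf)

lemma locmat_sym: "locmat h y a c = locmat h y c a"
  unfolding locmat_def by (simp add: add.commute)

lemma dual_omcond:
  fixes gs :: "'n::finite option mpoly list"
  assumes X: "\<forall>g\<in>set gs. in_X g" and k1: "1 \<le> k" and kg: "\<forall>g\<in>set gs. kdeg g \<le> k"
    and Y: "\<forall>c\<in>qmodule k (Gtilde gs). 0 \<le> riesz y c"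
  shows "omcond k gs y"
proof -
  let ?G = "Gtilde gs"
  have p1: "loc_psd (k - 1) (pvar None) y"
    by (rule dual_psd[OF Y]) (use k1 pdeg_pvar[of "None :: 'n option"] in \<open>auto simp: Gtilde_def\<close>)
  have p2: "loc_psd k 1 y"
    by (rule dual_psd[OF Y]) (auto simp: Gtilde_def)
  have p3: "loc_psd (k - kdeg g) (homog g) y" if g: "g \<in> set gs" for g
  proof (rule dual_psd[OF Y])
    show "homog g \<in> set (1 # ?G)" using g by (auto simp: Gtilde_def)
    have "pdeg (homog g) = pdeg g" using X g pdeg_homog by blast
    then show "2 * (k - kdeg g) + pdeg (homog g) \<le> 2 * k"
      using kg g unfolding kdeg_def by auto
  qed
  have s1: "loc_psd (k - 1) (sqnorm - 1) y"
    by (rule dual_psd[OF Y]) (use k1 pdeg_sqnorm_m1_le[where 'n='n] in \<open>auto simp: Gtilde_def\<close>)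
  have "pdeg (1 - sqnorm :: 'n option mpoly) = pdeg (sqnorm - 1 :: 'n option mpoly)"
    by (metis minus_diff_eq pdeg_uminus)
  then have s2: "loc_psd (k - 1) (1 - sqnorm) y"
    by (intro dual_psd[OF Y]) (use k1 pdeg_sqnorm_m1_le[where 'n='n] in \<open>auto simp: Gtilde_def\<close>)
  have s3: "loc_zero (k - 1) (sqnorm - 1) y"
    unfolding loc_zero_def
  proof (intro ballI)
    fix a c :: "'n option \<Rightarrow>\<^sub>0 nat" assume a: "a \<in> mons (k-1)" and c: "c \<in> mons (k-1)"
    show "locmat (sqnorm - 1) y a c = 0"
    proof (rule QF0[OF finite_mons _ _ a c])
      show "\<forall>a c. locmat (sqnorm - 1) y a c = locmat (sqnorm - 1) y c a" using locmat_sym by blast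
      show "\<forall>v. (\<Sum>a\<in>mons (k-1). \<Sum>c\<in>mons (k-1). v a * locmat (sqnorm - 1) y a c * v c) = 0"
      proof
        fix v :: "('n option \<Rightarrow>\<^sub>0 nat) \<Rightarrow> real"
        have "0 \<le> (\<Sum>a\<in>mons (k-1). \<Sum>c\<in>mons (k-1). v a * locmat (sqnorm - 1) y a c * v c)"
          using s1 unfolding loc_psd_def by (rule spec)
        moreover have "0 \<le> (\<Sum>a\<in>mons (k-1). \<Sum>c\<in>mons (k-1). v a * locmat (1 - sqnorm) y a c * v c)"
          using s2 unfolding loc_psd_def by (rule spec)
        moreover have "locmat (1 - sqnorm) y a c = - locmat (sqnorm - 1) y a c" for a c
          by (metis locmat_uminus minus_diff_eq)
        ultimately show "(\<Sum>a\<in>mons (k-1). \<Sum>c\<in>mons (k-1). v a * locmat (sqnorm - 1) y a c * v c) = 0"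
          by (simp add: sum_negf)
      qed
    qed
  qed
  show ?thesis unfolding omcond_def using p1 p2 p3 s1 s3 by blast
qed

definition linf :: "real \<Rightarrow> real^'n \<Rightarrow> 'n::finite option mpoly" where
  "linf b a = sg (sg None 1) (- b) + (\<Sum>i\<in>UNIV. sg (sg (Some i) 1) (a $ i))"

lemma riesz_linf: "riesz Y (linf b a) = - b * Y (sg None 1) + (\<Sum>i\<in>UNIV. a $ i * Y (sg (Some i) 1))"
  unfolding linf_def by (simp add: riesz_add riesz_sum riesz_single)

lemma keys_sg_sub: "ks (sg m v) \<subseteq> {m}"
  by simp

lemma linf_keys: "ks (linf b a) \<subseteq> insert (sg None 1) (range (\<lambda>i. sg (Some i) 1))"
proof -
  have "ks (\<Sum>i\<in>UNIV. sg (sg (Some i) 1) (a $ i) :: 'a option mpoly) \<subseteq> (\<Union>i\<in>UNIV. ks (sg (sg (Some i) 1) (a $ i) :: 'a option mpoly))"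
    by (rule keys_sum_sub)
  also have "\<dots> \<subseteq> range (\<lambda>i. sg (Some i) 1)"
  proof
    fix m assume "m \<in> (\<Union>i\<in>UNIV. ks (sg (sg (Some i) 1) (a $ i) :: 'a option mpoly))"
    then obtain i where "m \<in> ks (sg (sg (Some i) 1) (a $ i) :: 'a option mpoly)" by blast
    then have "m = sg (Some i) 1" by (simp split: if_splits)
    then show "m \<in> range (\<lambda>i. sg (Some i) 1)" by blast
  qed
  finally have 1: "ks (\<Sum>i\<in>UNIV. sg (sg (Some i) 1) (a $ i) :: 'a option mpoly) \<subseteq> range (\<lambda>i. sg (Some i) 1)" .
  have 2: "ks (sg (sg None 1) (- b) :: 'a option mpoly) \<subseteq> {sg None 1}" by (rule keys_sg_sub)
  show ?thesis unfolding linf_def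
    using keys_add[of "sg (sg None 1) (- b) :: 'a option mpoly" "\<Sum>i\<in>UNIV. sg (sg (Some i) 1) (a $ i)"] 1 2 by blast
qed

lemma linf_mdeg: "m \<in> ks (linf b a) \<Longrightarrow> mdeg m = 1"
  using linf_keys by fastforce

lemma linf_linforms: "linf b a \<in> linforms"
  unfolding linforms_def using linf_mdeg by blast

lemma linf_pdeg: "pdeg (linf b a) \<le> 1"
  unfolding pdeg_le_iff
proof
  fix m assume "m \<in> ks (linf b a)"
  then have "mdeg m = 1" by (rule linf_mdeg)
  then show "mdeg m \<le> 1" by simp
qed

lemma peval_linf: "peval (linf b a) (hpt x) = inner a x - b"
proof -
  have "peval (linf b a) (hpt x) = - b * mev (sg None 1) (hpt x) + (\<Sum>i\<in>UNIV. a $ i * mev (sg (Some i) 1) (hpt x))"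
    unfolding peval_riesz by (rule riesz_linf)
  also have "\<dots> = - b + (\<Sum>i\<in>UNIV. a $ i * x $ i)"
    by (simp add: mev_single hpt_def)
  also have "(\<Sum>i\<in>UNIV. a $ i * x $ i) = inner a x"
    by (simp add: inner_vec_def)
  finally show ?thesis by simp
qed

lemma modTH_sub_closure:
  fixes gs :: "'n::finite option mpoly list" and k :: nat
  assumes X: "\<forall>g\<in>set gs. in_X g"
    and S: "semialg gs \<noteq> {}"
    and k1: "k \<ge> 1" and kg: "\<forall>g\<in>set gs. k \<ge> kdeg g"
    and cl: "closed_in_polys (2 * k) (qmodule k (Gtilde gs))"
  shows "modTH k (Gtilde gs) \<subseteq> closure (Omega k gs)"
proof
  fix x assume xT: "x \<in> modTH k (Gtilde gs)"
  show "x \<in> closure (Omega k gs)"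
  proof (rule ccontr)
    assume xn: "x \<notin> closure (Omega k gs)"
    let ?C = "qmodule k (Gtilde gs)"
    let ?N = "mons (2*k) :: ('n option \<Rightarrow>\<^sub>0 nat) set"
    obtain a b where ab: "inner a x < b" "\<forall>z\<in>closure (Omega k gs). b < inner a z"
      using separating_hyperplane_closed_point[OF convex_closure[OF convex_Omega] closed_closure xn] by blast
    define l where "l = linf b a"
    have lC: "l \<notin> ?C"
    proof
      assume "l \<in> ?C"
      then have "0 \<le> peval l (hpt x)" using xT linf_linforms unfolding modTH_def l_def by blast
      then show False using ab(1) by (simp add: l_def peval_linf)
    qed
    have CN: "\<forall>c\<in>?C. ks c \<subseteq> ?N"
      using cl unfolding closed_in_polys_def polys_deg_def by (auto simp: pdeg_le_mons[symmetric])
    have lN: "ks l \<subseteq> ?N" unfolding pdeg_le_mons[symmetric] l_def using linf_pdeg[of b a] k1 by linarith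
    have Csc: "\<forall>c\<in>?C. \<forall>r\<ge>0. \<exists>c'\<in>?C. \<forall>a. lk c' a = r * lk c a"
      using qmod_smul lk_smul by blast
    have Ccl: "\<forall>ps q. (\<forall>j. ps j \<in> ?C) \<and> ks q \<subseteq> ?N \<and> (\<forall>a. (\<lambda>j. lk (ps j) a) \<longlonglongrightarrow> lk q a) \<longrightarrow> q \<in> ?C"
      using cl unfolding closed_in_polys_def polys_deg_def by (auto simp: pdeg_le_mons[symmetric])
    obtain y where y1: "\<forall>c\<in>?C. 0 \<le> (\<Sum>m\<in>?N. y m * lk c m)" and y2: "(\<Sum>m\<in>?N. y m * lk l m) < 0"
      using bipolar[OF finite_mons CN lN qmod_zero _ Csc Ccl lC] qmod_add by blast
    have Y: "\<forall>c\<in>?C. 0 \<le> riesz y c"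
    proof
      fix c assume c: "c \<in> ?C"
      have "riesz y c = (\<Sum>m\<in>?N. lk c m * y m)" using CN c by (intro riesz_superset finite_mons) auto
      then show "0 \<le> riesz y c" using y1 c by (simp add: mult.commute)
    qed
    have rl: "riesz y l < 0"
    proof -
      have "riesz y l = (\<Sum>m\<in>?N. lk l m * y m)" using lN by (intro riesz_superset finite_mons) auto
      then show ?thesis using y2 by (simp add: mult.commute)
    qed
    have oc: "omcond k gs y" using dual_omcond[OF X k1 _ Y] kg by auto
    have X0: "0 \<le> riesz y (pvar None)"
    proof -
      have "pdeg (1 * 1 * pvar None :: 'n option mpoly) \<le> 2 * k" using pdeg_pvar[of "None :: 'n option"] k1 by simp
      then have "1 * 1 * pvar None \<in> ?C" by (intro qmod_gen) (auto simp: Gtilde_def)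
      then show ?thesis using Y by simp
    qed
    obtain s where s: "s \<in> semialg gs" using S by blast
    obtain z0 where z0: "omcond k gs (\<lambda>a. mev a z0)" "0 < z0 None"
      using point_omcond[OF X s] by blast
    define y0 where "y0 a = mev a z0" for a
    have y0X: "riesz y0 (pvar None) = z0 None" by (simp add: y0_def riesz_pvar mev_single)
    have key: "0 < riesz y l + \<epsilon> * riesz y0 l" if eps: "0 < \<epsilon>" for \<epsilon>
    proof -
      define t where "t = riesz y (pvar None) + \<epsilon> * z0 None"
      have "0 < \<epsilon> * z0 None" using eps z0(2) by simp
      then have t0: "0 < t" using X0 unfolding t_def by linarith
      define ye where "ye a = (1/t) * y a + (\<epsilon>/t) * y0 a" for a
      have oce: "omcond k gs ye" unfolding ye_def y0_def
        by (rule omcond_lin[OF oc z0(1)]) (use t0 eps in auto)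
      have "riesz ye (pvar None) = (1/t) * riesz y (pvar None) + (\<epsilon>/t) * riesz y0 (pvar None)"
        unfolding ye_def by (rule riesz_lin_y)
      also have "\<dots> = (riesz y (pvar None) + \<epsilon> * z0 None) / t"
        using y0X by (simp add: add_divide_distrib)
      also have "\<dots> = 1" using t0 unfolding t_def by simp
      finally have ye1: "riesz ye (pvar None) = 1" .
      define zz where "zz = (\<chi> i. riesz ye (pvar (Some i)))"
      have "zz \<in> Omega k gs" unfolding Omega_iff zz_def using ye1 oce by auto
      then have "b < inner a zz" using ab(2) closure_subset by blast
      moreover have "riesz ye l = inner a zz - b"
      proof -
        have e1: "ye (sg None 1) = 1" using ye1 by (simp add: riesz_pvar)
        show ?thesis unfolding l_def riesz_linf e1 by (simp add: riesz_pvar zz_def inner_vec_def)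
      qed
      moreover have "riesz ye l = (1/t) * riesz y l + (\<epsilon>/t) * riesz y0 l"
        unfolding ye_def by (rule riesz_lin_y)
      ultimately have "0 < (1/t) * riesz y l + (\<epsilon>/t) * riesz y0 l" by simp
      moreover have "(1/t) * riesz y l + (\<epsilon>/t) * riesz y0 l = (riesz y l + \<epsilon> * riesz y0 l) / t"
        by (simp add: add_divide_distrib)
      ultimately have "0 < (riesz y l + \<epsilon> * riesz y0 l) / t" by simp
      then show ?thesis using t0 by (simp add: zero_less_divide_iff)
    qed
    define \<epsilon> where "\<epsilon> = - riesz y l / (\<bar>riesz y0 l\<bar> + 1)"
    have "0 < \<bar>riesz y0 l\<bar> + 1" by simp
    then have e0: "0 < \<epsilon>" using rl unfolding \<epsilon>_def by (intro divide_pos_pos) auto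
    have "\<epsilon> * riesz y0 l \<le> \<epsilon> * \<bar>riesz y0 l\<bar>" using e0 by (simp add: mult_left_mono)
    also have "\<dots> < \<epsilon> * (\<bar>riesz y0 l\<bar> + 1)" using e0 by simp
    also have "\<dots> = - riesz y l" unfolding \<epsilon>_def by simp
    finally have "riesz y l + \<epsilon> * riesz y0 l < 0" by simp
    with key[OF e0] show False by simp
  qed
qed

theorem mainTheorem13:
  fixes gs :: "'n::finite option mpoly list" and k :: nat
  assumes "\<forall>g\<in>set gs. in_X g"
    and "semialg gs \<noteq> {}"
    and "k \<ge> 1" and "\<forall>g\<in>set gs. k \<ge> kdeg g"
    and "closed_in_polys (2 * k) (qmodule k (Gtilde gs))"
  shows "modTH k (Gtilde gs) = closure (Omega k gs)"
  using modTH_sub_closure[OF assms] closure_omega_sub[OF assms(1)] by blast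

end
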